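(* Let $C^*>0$ and $C_1,C_2>0$. Let $\boldsymbol m_e\in[C(\bar\Omega)]^3$ satisfy $\|\boldsymbol m_e\|_{W^{1,\infty}}\le C^*$ and $|\boldsymbol m_e|=1$ pointwise, and let $\underline{\boldsymbol m}_h=\mathcal P_h\boldsymbol m_e$. For a grid function $\tilde{\boldsymbol m}_h\in\boldsymbol X$ set $\boldsymbol m_h=\tilde{\boldsymbol m}_h/|\tilde{\boldsymbol m}_h|$ pointwise, $\boldsymbol e_h=\underline{\boldsymbol m}_h-\boldsymbol m_h$, $\tilde{\boldsymbol e}_h=\underline{\boldsymbol m}_h-\tilde{\boldsymbol m}_h$. Suppose $$\|\tilde{\boldsymbol e}_h\|_2\le2k^{15/8},\qquad\|\nabla_h\tilde{\boldsymbol e}_h\|_2\le\tfrac12k^{11/8},$$ where $k>0$ and $C_1h\le k\le C_2h$. Then, for $k$ and $h$ sufficiently small, $\tilde{\boldsymbol m}_h$ does not vanish, and $$\|\tilde{\boldsymbol e}_h\|_2^2\ge(1-k^{5/4})\|\boldsymbol e_h\|_2^2+(1-k^{1/4})\|\tilde{\boldsymbol e}_h-\boldsymbol e_h\|_2^2,$$ and for every $\delta>0$ there is a constant $\mathcal C_\delta$ (independent of $h,k$) such that $$\|\nabla_h\boldsymbol e_h\|_2^2\le(1+\delta)\|\nabla_h\tilde{\boldsymbol e}_h\|_2^2+\mathcal C_\delta\|\tilde{\boldsymbol e}_h\|_2^2.$$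
   Context: $\Omega=[0,1]^3$, $h=1/N$, cell-centered grid points $((i-\tfrac12)h,(j-\tfrac12)h,(\ell-\tfrac12)h)$, $0\le i,j,\ell\le N+1$, interior points $\Omega_h^0$ those with $1\le i,j,\ell\le N$. $\boldsymbol X$ is the space of $\mathbb R^3$-valued grid functions satisfying the discrete Neumann condition $\boldsymbol m_{0,j,\ell}=\boldsymbol m_{1,j,\ell}$, $\boldsymbol m_{N+1,j,\ell}=\boldsymbol m_{N,j,\ell}$ (and analogously in $j,\ell$). $\mathcal P_h$ is pointwise interpolation at interior points, extended to ghost points by the Neumann condition. Forward differences $D_xf_{i,j,\ell}=(f_{i+1,j,\ell}-f_{i,j,\ell})/h$ (similarly $D_y,D_z$); $\nabla_h$ collects all forward differences. $\|\boldsymbol f\|_2^2=h^3\sum_{\Omega_h^0}|\boldsymbol f|^2$ and $\|\nabla_h\boldsymbol f\|_2$ is the analogous discrete norm of the difference quotients. *)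

theory Defs
  imports "HOL-Analysis.Analysis"
begin

text \<open>Cell-centred grid on the unit cube with N cells per direction, h = 1/N.
  A grid function is a map from index triples (i,j,l) to R^3; only indices
  0..N+1 (interior 1..N plus ghost points) are meaningful.\<close>

type_synonym gridfun = "nat \<Rightarrow> nat \<Rightarrow> nat \<Rightarrow> real^3"

definition gh :: "nat \<Rightarrow> real" where
  "gh N = 1 / real N"

definition unit_cube :: "(real^3) set" where
  "unit_cube = cbox (vec 0) (vec 1)"

definition gpt :: "nat \<Rightarrow> nat \<Rightarrow> nat \<Rightarrow> nat \<Rightarrow> real^3" where
  "gpt N i j l = vector [(real i - 1/2) * gh N, (real j - 1/2) * gh N, (real l - 1/2) * gh N]"

text \<open>The space X: discrete homogeneous Neumann condition at the ghost points.\<close>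
definition in_X :: "nat \<Rightarrow> gridfun \<Rightarrow> bool" where
  "in_X N m \<longleftrightarrow>
     (\<forall>j\<le>N+1. \<forall>l\<le>N+1. m 0 j l = m 1 j l \<and> m (N+1) j l = m N j l) \<and>
     (\<forall>i\<le>N+1. \<forall>l\<le>N+1. m i 0 l = m i 1 l \<and> m i (N+1) l = m i N l) \<and>
     (\<forall>i\<le>N+1. \<forall>j\<le>N+1. m i j 0 = m i j 1 \<and> m i j (N+1) = m i j N)"

definition clampi :: "nat \<Rightarrow> nat \<Rightarrow> nat" where
  "clampi N i = max 1 (min N i)"

text \<open>P_h: pointwise interpolation at interior points, extended to ghost points
  by the Neumann condition.\<close>
definition Ph :: "nat \<Rightarrow> (real^3 \<Rightarrow> real^3) \<Rightarrow> gridfun" where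
  "Ph N f i j l = f (gpt N (clampi N i) (clampi N j) (clampi N l))"

definition Dx :: "nat \<Rightarrow> gridfun \<Rightarrow> gridfun" where
  "Dx N f i j l = (f (i+1) j l - f i j l) /\<^sub>R gh N"
definition Dy :: "nat \<Rightarrow> gridfun \<Rightarrow> gridfun" where
  "Dy N f i j l = (f i (j+1) l - f i j l) /\<^sub>R gh N"
definition Dz :: "nat \<Rightarrow> gridfun \<Rightarrow> gridfun" where
  "Dz N f i j l = (f i j (l+1) - f i j l) /\<^sub>R gh N"

definition l2norm :: "nat \<Rightarrow> gridfun \<Rightarrow> real" where
  "l2norm N f = sqrt (gh N ^ 3 * (\<Sum>i\<in>{1..N}. \<Sum>j\<in>{1..N}. \<Sum>l\<in>{1..N}. (norm (f i j l))\<^sup>2))"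

definition gradnorm :: "nat \<Rightarrow> gridfun \<Rightarrow> real" where
  "gradnorm N f = sqrt (gh N ^ 3 * (\<Sum>i\<in>{1..N}. \<Sum>j\<in>{1..N}. \<Sum>l\<in>{1..N}.
       (norm (Dx N f i j l))\<^sup>2 + (norm (Dy N f i j l))\<^sup>2 + (norm (Dz N f i j l))\<^sup>2))"

definition gnormalize :: "gridfun \<Rightarrow> gridfun" where
  "gnormalize m i j l = m i j l /\<^sub>R norm (m i j l)"

end

theory Submission
  imports Defs
begin



lemma norm_vec3: "norm (vector [x,y,z] :: real^3) = sqrt (x^2 + y^2 + z^2)"
  by (simp add: norm_eq_sqrt_inner inner_vec_def sum_3 power2_eq_square)

lemma gpt_diff: "gpt N i' j' l' - gpt N i j l =
  vector [(real i' - real i) * gh N, (real j' - real j) * gh N, (real l' - real l) * gh N]"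
  unfolding gpt_def by (simp add: vec_eq_iff forall_3 algebra_simps)

lemma clampi_in: "1 \<le> N \<Longrightarrow> clampi N i \<in> {1..N}"
  by (auto simp: clampi_def)

lemma gpt_in: assumes "i \<in> {1..N}" "j \<in> {1..N}" "l \<in> {1..N}"
  shows "gpt N i j l \<in> unit_cube"
proof -
  have h: "\<And>i. i \<in> {1..N} \<Longrightarrow> 0 \<le> (real i - 1/2) * gh N \<and> (real i - 1/2) * gh N \<le> 1"
  proof -
    fix i assume "i \<in> {1..N}"
    then have "1 \<le> real i" "real i \<le> real N" "1 \<le> real N" by auto
    then show "0 \<le> (real i - 1/2) * gh N \<and> (real i - 1/2) * gh N \<le> 1"
      by (auto simp: gh_def field_simps)
  qed
  show ?thesis unfolding unit_cube_def mem_box_cart gpt_def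
    using h[OF assms(1)] h[OF assms(2)] h[OF assms(3)] by (auto simp: forall_3)
qed

lemma Ph_unit:
  assumes "N \<ge> 1" "\<forall>x\<in>unit_cube. norm (me x) = 1"
  shows "norm (Ph N me i j l) = 1"
  unfolding Ph_def using assms gpt_in clampi_in by blast

lemma clamp_step: "\<bar>real (clampi N (Suc i)) - real (clampi N i)\<bar> \<le> 1"
  by (auto simp: clampi_def max_def min_def)

lemma Ph_lip:
  assumes "N \<ge> 1" "Cs-lipschitz_on unit_cube me" "Cs > 0"
  shows "norm (Ph N me (Suc i) j l - Ph N me i j l) \<le> Cs * gh N"
    and "norm (Ph N me i (Suc j) l - Ph N me i j l) \<le> Cs * gh N"
    and "norm (Ph N me i j (Suc l) - Ph N me i j l) \<le> Cs * gh N"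
proof -
  have g: "gh N > 0" using assms(1) by (simp add: gh_def)
  have key: "norm (Ph N me i' j' l' - Ph N me i j l) \<le> Cs * gh N"
    if "\<bar>real (clampi N i') - real (clampi N i)\<bar> + \<bar>real (clampi N j') - real (clampi N j)\<bar>
        + \<bar>real (clampi N l') - real (clampi N l)\<bar> \<le> 1" for i' j' l'
  proof -
    let ?x = "real (clampi N i') - real (clampi N i)"
    let ?y = "real (clampi N j') - real (clampi N j)"
    let ?z = "real (clampi N l') - real (clampi N l)"
    have "norm (Ph N me i' j' l' - Ph N me i j l) \<le> Cs * dist (gpt N (clampi N i') (clampi N j') (clampi N l')) (gpt N (clampi N i) (clampi N j) (clampi N l))"
      unfolding Ph_def dist_norm[symmetric]
      by (rule lipschitz_onD[OF assms(2)]) (auto intro!: gpt_in clampi_in assms(1))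
    also have "dist (gpt N (clampi N i') (clampi N j') (clampi N l')) (gpt N (clampi N i) (clampi N j) (clampi N l))
       = gh N * sqrt (?x^2 + ?y^2 + ?z^2)"
    proof -
      have "(?x * gh N)^2 + (?y * gh N)^2 + (?z * gh N)^2 = (gh N)^2 * (?x^2 + ?y^2 + ?z^2)"
        by (simp add: power_mult_distrib power2_eq_square algebra_simps)
      then show ?thesis unfolding dist_norm gpt_diff norm_vec3 using g
        by (simp add: real_sqrt_mult)
    qed
    also have "sqrt (?x^2 + ?y^2 + ?z^2) \<le> 1"
    proof -
      have "?x^2 + ?y^2 + ?z^2 \<le> (\<bar>?x\<bar> + \<bar>?y\<bar> + \<bar>?z\<bar>)^2"
        by (simp add: power2_eq_square algebra_simps abs_mult_self_eq)
      also have "\<dots> \<le> 1" using that by (simp add: power_le_one)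
      finally show ?thesis by simp
    qed
    then have "Cs * (gh N * sqrt (?x^2 + ?y^2 + ?z^2)) \<le> Cs * gh N"
      using g assms(3) by (simp add: mult_left_le)
    finally show ?thesis by simp
  qed
  show "norm (Ph N me (Suc i) j l - Ph N me i j l) \<le> Cs * gh N"
    by (rule key) (use clamp_step[of N i] in simp)
  show "norm (Ph N me i (Suc j) l - Ph N me i j l) \<le> Cs * gh N"
    by (rule key) (use clamp_step[of N j] in simp)
  show "norm (Ph N me i j (Suc l) - Ph N me i j l) \<le> Cs * gh N"
    by (rule key) (use clamp_step[of N l] in simp)
qed




lemma mt_clamp:
  assumes X: "in_X N m" and "N \<ge> 1" and "i \<le> N+1" "j \<le> N+1" "l \<le> N+1"
  shows "m i j l = m (clampi N i) (clampi N j) (clampi N l)"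
proof -
  have cx: "m i j l = m (clampi N i) j l" if "i \<le> N+1" "j \<le> N+1" "l \<le> N+1" for i j l
  proof -
    have "clampi N i = i \<or> (i = 0 \<and> clampi N i = 1) \<or> (i = N+1 \<and> clampi N i = N)"
      using that \<open>N\<ge>1\<close> unfolding clampi_def by (auto simp: max_def min_def)
    then show ?thesis using X that unfolding in_X_def by auto
  qed
  have cy: "m i j l = m i (clampi N j) l" if "i \<le> N+1" "j \<le> N+1" "l \<le> N+1" for i j l
  proof -
    have "clampi N j = j \<or> (j = 0 \<and> clampi N j = 1) \<or> (j = N+1 \<and> clampi N j = N)"
      using that \<open>N\<ge>1\<close> unfolding clampi_def by (auto simp: max_def min_def)
    then show ?thesis using X that unfolding in_X_def by auto
  qed
  have cz: "m i j l = m i j (clampi N l)" if "i \<le> N+1" "j \<le> N+1" "l \<le> N+1" for i j l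
  proof -
    have "clampi N l = l \<or> (l = 0 \<and> clampi N l = 1) \<or> (l = N+1 \<and> clampi N l = N)"
      using that \<open>N\<ge>1\<close> unfolding clampi_def by (auto simp: max_def min_def)
    then show ?thesis using X that unfolding in_X_def by auto
  qed
  have b: "clampi N x \<le> N+1" for x using clampi_in[OF \<open>N\<ge>1\<close>, of x] by auto
  show ?thesis using cx[of i j l] cy[of "clampi N i" j l] cz[of "clampi N i" "clampi N j" l] assms b
    by simp
qed

lemma Ph_clamp: "N \<ge> 1 \<Longrightarrow> Ph N f i j l = Ph N f (clampi N i) (clampi N j) (clampi N l)"
  unfolding Ph_def clampi_def by (simp add: max_def min_def)

lemma oned_diff:
  fixes g :: "nat \<Rightarrow> real"
  shows "p \<le> q \<Longrightarrow> \<bar>g q - g p\<bar> \<le> (\<Sum>i\<in>{p..<q}. \<bar>g (Suc i) - g i\<bar>)"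
proof (induction q)
  case 0 then show ?case by simp
next
  case (Suc q)
  show ?case
  proof (cases "p = Suc q")
    case True then show ?thesis by simp
  next
    case False
    then have "p \<le> q" using Suc.prems by simp
    then have "\<bar>g (Suc q) - g p\<bar> \<le> \<bar>g (Suc q) - g q\<bar> + (\<Sum>i\<in>{p..<q}. \<bar>g (Suc i) - g i\<bar>)"
      using Suc.IH by linarith
    also have "\<dots> = (\<Sum>i\<in>{p..<Suc q}. \<bar>g (Suc i) - g i\<bar>)"
      using \<open>p \<le> q\<close> by simp
    finally show ?thesis .
  qed
qed

lemma oned_bound:
  fixes g :: "nat \<Rightarrow> real"
  assumes "p \<in> {1..N}"
  shows "g p \<le> (\<Sum>q\<in>{1..N}. g q) / real N + (\<Sum>i\<in>{1..N}. \<bar>g (Suc i) - g i\<bar>)"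
proof -
  let ?V = "\<Sum>i\<in>{1..N}. \<bar>g (Suc i) - g i\<bar>"
  have N: "N \<ge> 1" using assms by auto
  have "g p \<le> g q + ?V" if q: "q \<in> {1..N}" for q
  proof -
    have "\<bar>g (max p q) - g (min p q)\<bar> \<le> (\<Sum>i\<in>{min p q..<max p q}. \<bar>g (Suc i) - g i\<bar>)"
      by (rule oned_diff) simp
    also have "\<dots> \<le> ?V"
      by (rule sum_mono2) (use assms q in auto)
    finally have "\<bar>g (max p q) - g (min p q)\<bar> \<le> ?V" .
    then show ?thesis by (cases "p \<le> q") (auto simp: max_def min_def)
  qed
  then have "(\<Sum>q\<in>{1..N}. g p) \<le> (\<Sum>q\<in>{1..N}. g q + ?V)"
    by (rule sum_mono)
  then have "real N * g p \<le> (\<Sum>q\<in>{1..N}. g q) + real N * ?V"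
    by (simp add: sum.distrib)
  then show ?thesis using N by (simp add: field_simps)
qed

lemma shift1:
  fixes g :: "nat \<Rightarrow> real"
  assumes "N \<ge> 1" "\<forall>i\<in>{1..N}. 0 \<le> g i" "g (Suc N) = g N"
  shows "(\<Sum>i\<in>{1..N}. g (Suc i)) \<le> 2 * (\<Sum>i\<in>{1..N}. g i)"
proof -
  have "(\<Sum>i\<in>{1..N}. g (Suc i)) = (\<Sum>i\<in>{Suc 1..Suc N}. g i)"
    by (rule sum.shift_bounds_cl_Suc_ivl[symmetric])
  also have "\<dots> = (\<Sum>i\<in>{2..N}. g i) + g N"
    using assms(1,3) by (simp add: sum.cl_ivl_Suc numeral_2_eq_2)
  also have "(\<Sum>i\<in>{2..N}. g i) \<le> (\<Sum>i\<in>{1..N}. g i)"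
    by (rule sum_mono2) (use assms in auto)
  also have "g N \<le> (\<Sum>i\<in>{1..N}. g i)"
    by (rule member_le_sum) (use assms in auto)
  finally show ?thesis by simp
qed

lemma sq_diff:
  fixes x y :: "'a::real_inner"
  assumes "\<mu> > 0"
  shows "\<bar>(norm y)^2 - (norm x)^2\<bar> \<le> \<mu> * (norm x)^2 + (1 + 1/\<mu>) * (norm (y - x))^2"
proof -
  have e: "(norm y)^2 = (norm x)^2 + 2 * inner x (y - x) + (norm (y - x))^2"
    by (simp add: power2_norm_eq_inner inner_diff algebra_simps inner_commute)
  have c: "\<bar>inner x (y - x)\<bar> \<le> norm x * norm (y - x)" by (rule Cauchy_Schwarz_ineq2)
  have "2 * (norm x * norm (y - x)) \<le> \<mu> * (norm x)^2 + (1/\<mu>) * (norm (y - x))^2"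
  proof -
    have "0 \<le> (\<mu> * norm x - norm (y - x))^2 / \<mu>" using assms by simp
    also have "\<dots> = \<mu> * (norm x)^2 - 2 * (norm x * norm (y - x)) + (1/\<mu>) * (norm (y - x))^2"
      using assms by (simp add: power2_eq_square field_simps)
    finally show ?thesis by simp
  qed
  moreover have "0 \<le> (1/\<mu>) * (norm (y - x))^2" using assms by simp
  moreover have "(1 + 1/\<mu>) * (norm (y - x))^2 = (norm (y - x))^2 + (1/\<mu>) * (norm (y - x))^2"
    by (simp add: algebra_simps)
  moreover have "0 \<le> (norm (y - x))^2" by simp
  ultimately show ?thesis using e c by (simp only: abs_le_iff) linarith
qed




lemma swap3: "(\<Sum>l\<in>C. \<Sum>i\<in>A. \<Sum>j\<in>B. F i j l) = (\<Sum>i\<in>A. \<Sum>j\<in>B. \<Sum>l\<in>C. F i j l)"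
  by (rule trans[OF sum.swap], rule sum.cong[OF refl], rule sum.swap)

lemma abs_diff_sum2:
  fixes F G :: "nat \<Rightarrow> nat \<Rightarrow> real"
  shows "\<bar>(\<Sum>i\<in>A. \<Sum>j\<in>B. F i j) - (\<Sum>i\<in>A. \<Sum>j\<in>B. G i j)\<bar> \<le> (\<Sum>i\<in>A. \<Sum>j\<in>B. \<bar>F i j - G i j\<bar>)"
proof -
  have "(\<Sum>i\<in>A. \<Sum>j\<in>B. F i j) - (\<Sum>i\<in>A. \<Sum>j\<in>B. G i j) = (\<Sum>i\<in>A. \<Sum>j\<in>B. F i j - G i j)"
    by (simp add: sum_subtractf)
  also have "\<bar>\<dots>\<bar> \<le> (\<Sum>i\<in>A. \<bar>\<Sum>j\<in>B. F i j - G i j\<bar>)" by (rule sum_abs)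
  also have "\<dots> \<le> (\<Sum>i\<in>A. \<Sum>j\<in>B. \<bar>F i j - G i j\<bar>)" by (intro sum_mono sum_abs)
  finally show ?thesis .
qed

lemma abs_diff_sum1:
  fixes F G :: "nat \<Rightarrow> real"
  shows "\<bar>(\<Sum>i\<in>A. F i) - (\<Sum>i\<in>A. G i)\<bar> \<le> (\<Sum>i\<in>A. \<bar>F i - G i\<bar>)"
  by (metis sum_abs sum_subtractf)

lemma level_z:
  fixes f :: "nat \<Rightarrow> nat \<Rightarrow> nat \<Rightarrow> 'a::real_inner"
  assumes "l \<in> {1..N}" "\<mu> > 0"
  shows "(\<Sum>i\<in>{1..N}. \<Sum>j\<in>{1..N}. (norm (f i j l))^2)
    \<le> (\<Sum>i\<in>{1..N}. \<Sum>j\<in>{1..N}. \<Sum>l\<in>{1..N}. (norm (f i j l))^2) / real N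
      + \<mu> * (\<Sum>i\<in>{1..N}. \<Sum>j\<in>{1..N}. \<Sum>l\<in>{1..N}. (norm (f i j l))^2)
      + (1 + 1/\<mu>) * (\<Sum>i\<in>{1..N}. \<Sum>j\<in>{1..N}. \<Sum>l\<in>{1..N}. (norm (f i j (Suc l) - f i j l))^2)"
proof -
  define I where "I = {1..N}"
  define g where "g l = (\<Sum>i\<in>I. \<Sum>j\<in>I. (norm (f i j l))^2)" for l
  have "g l \<le> (\<Sum>l\<in>I. g l) / real N + (\<Sum>l\<in>I. \<bar>g (Suc l) - g l\<bar>)"
    using oned_bound[OF assms(1), of g] by (simp add: I_def)
  also have "(\<Sum>l\<in>I. g l) = (\<Sum>i\<in>I. \<Sum>j\<in>I. \<Sum>l\<in>I. (norm (f i j l))^2)"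
    unfolding g_def by (rule swap3)
  also have "(\<Sum>l\<in>I. \<bar>g (Suc l) - g l\<bar>) \<le> (\<Sum>l\<in>I. \<Sum>i\<in>I. \<Sum>j\<in>I.
       \<mu> * (norm (f i j l))^2 + (1 + 1/\<mu>) * (norm (f i j (Suc l) - f i j l))^2)"
  proof (rule sum_mono)
    fix l
    have "\<bar>g (Suc l) - g l\<bar> \<le> (\<Sum>i\<in>I. \<Sum>j\<in>I. \<bar>(norm (f i j (Suc l)))^2 - (norm (f i j l))^2\<bar>)"
      unfolding g_def by (rule abs_diff_sum2)
    also have "\<dots> \<le> (\<Sum>i\<in>I. \<Sum>j\<in>I. \<mu> * (norm (f i j l))^2 + (1 + 1/\<mu>) * (norm (f i j (Suc l) - f i j l))^2)"
      by (intro sum_mono sq_diff assms(2))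
    finally show "\<bar>g (Suc l) - g l\<bar> \<le> \<dots>" .
  qed
  also have "\<dots> = \<mu> * (\<Sum>i\<in>I. \<Sum>j\<in>I. \<Sum>l\<in>I. (norm (f i j l))^2)
      + (1 + 1/\<mu>) * (\<Sum>i\<in>I. \<Sum>j\<in>I. \<Sum>l\<in>I. (norm (f i j (Suc l) - f i j l))^2)"
    by (subst swap3) (simp add: sum.distrib sum_distrib_left)
  finally show ?thesis unfolding g_def I_def by simp
qed

lemma level_y:
  fixes f :: "nat \<Rightarrow> nat \<Rightarrow> nat \<Rightarrow> 'a::real_inner"
  assumes "j \<in> {1..N}" "l \<in> {1..N}" "\<mu> > 0"
  shows "(\<Sum>i\<in>{1..N}. (norm (f i j l))^2)
    \<le> (\<Sum>i\<in>{1..N}. \<Sum>j\<in>{1..N}. (norm (f i j l))^2) / real N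
      + \<mu> * (\<Sum>i\<in>{1..N}. \<Sum>j\<in>{1..N}. (norm (f i j l))^2)
      + (1 + 1/\<mu>) * (\<Sum>i\<in>{1..N}. \<Sum>j\<in>{1..N}. \<Sum>l\<in>{1..N}. (norm (f i (Suc j) l - f i j l))^2)"
proof -
  define I where "I = {1..N}"
  define g where "g j = (\<Sum>i\<in>I. (norm (f i j l))^2)" for j
  have "g j \<le> (\<Sum>j\<in>I. g j) / real N + (\<Sum>j\<in>I. \<bar>g (Suc j) - g j\<bar>)"
    using oned_bound[OF assms(1), of g] by (simp add: I_def)
  also have "(\<Sum>j\<in>I. g j) = (\<Sum>i\<in>I. \<Sum>j\<in>I. (norm (f i j l))^2)"
    unfolding g_def by (rule sum.swap)
  also have "(\<Sum>j\<in>I. \<bar>g (Suc j) - g j\<bar>) \<le> (\<Sum>j\<in>I. \<Sum>i\<in>I.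
       \<mu> * (norm (f i j l))^2 + (1 + 1/\<mu>) * (norm (f i (Suc j) l - f i j l))^2)"
  proof (rule sum_mono)
    fix j
    have "\<bar>g (Suc j) - g j\<bar> \<le> (\<Sum>i\<in>I. \<bar>(norm (f i (Suc j) l))^2 - (norm (f i j l))^2\<bar>)"
      unfolding g_def by (rule abs_diff_sum1)
    also have "\<dots> \<le> (\<Sum>i\<in>I. \<mu> * (norm (f i j l))^2 + (1 + 1/\<mu>) * (norm (f i (Suc j) l - f i j l))^2)"
      by (intro sum_mono sq_diff assms(3))
    finally show "\<bar>g (Suc j) - g j\<bar> \<le> \<dots>" .
  qed
  also have "\<dots> = \<mu> * (\<Sum>i\<in>I. \<Sum>j\<in>I. (norm (f i j l))^2)
      + (1 + 1/\<mu>) * (\<Sum>i\<in>I. \<Sum>j\<in>I. (norm (f i (Suc j) l - f i j l))^2)"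
    by (subst sum.swap) (simp add: sum.distrib sum_distrib_left)
  also have "(\<Sum>i\<in>I. \<Sum>j\<in>I. (norm (f i (Suc j) l - f i j l))^2)
      \<le> (\<Sum>i\<in>I. \<Sum>j\<in>I. \<Sum>l\<in>I. (norm (f i (Suc j) l - f i j l))^2)"
    by (intro sum_mono member_le_sum) (use assms(2) in \<open>auto simp: I_def\<close>)
  finally show ?thesis unfolding g_def I_def using assms(3)
    by (simp add: mult_left_mono add_pos_pos)
qed

lemma level_x:
  fixes f :: "nat \<Rightarrow> nat \<Rightarrow> nat \<Rightarrow> 'a::real_inner"
  assumes "i \<in> {1..N}" "j \<in> {1..N}" "l \<in> {1..N}" "\<mu> > 0"
  shows "(norm (f i j l))^2
    \<le> (\<Sum>i\<in>{1..N}. (norm (f i j l))^2) / real N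
      + \<mu> * (\<Sum>i\<in>{1..N}. (norm (f i j l))^2)
      + (1 + 1/\<mu>) * (\<Sum>i\<in>{1..N}. \<Sum>j\<in>{1..N}. \<Sum>l\<in>{1..N}. (norm (f (Suc i) j l - f i j l))^2)"
proof -
  define I where "I = {1..N}"
  define g where "g i = (norm (f i j l))^2" for i
  have "g i \<le> (\<Sum>i\<in>I. g i) / real N + (\<Sum>i\<in>I. \<bar>g (Suc i) - g i\<bar>)"
    using oned_bound[OF assms(1), of g] by (simp add: I_def)
  also have "(\<Sum>i\<in>I. \<bar>g (Suc i) - g i\<bar>) \<le> (\<Sum>i\<in>I.
       \<mu> * (norm (f i j l))^2 + (1 + 1/\<mu>) * (norm (f (Suc i) j l - f i j l))^2)"
    unfolding g_def by (intro sum_mono sq_diff assms(4))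
  also have "\<dots> = \<mu> * (\<Sum>i\<in>I. (norm (f i j l))^2)
      + (1 + 1/\<mu>) * (\<Sum>i\<in>I. (norm (f (Suc i) j l - f i j l))^2)"
    by (simp add: sum.distrib sum_distrib_left)
  also have "(\<Sum>i\<in>I. (norm (f (Suc i) j l - f i j l))^2)
      \<le> (\<Sum>i\<in>I. \<Sum>j\<in>I. \<Sum>l\<in>I. (norm (f (Suc i) j l - f i j l))^2)"
  proof (intro sum_mono)
    fix i assume "i \<in> I"
    have "(norm (f (Suc i) j l - f i j l))^2 \<le> (\<Sum>l\<in>I. (norm (f (Suc i) j l - f i j l))^2)"
      by (rule member_le_sum) (use assms(3) in \<open>auto simp: I_def\<close>)
    also have "\<dots> \<le> (\<Sum>j\<in>I. \<Sum>l\<in>I. (norm (f (Suc i) j l - f i j l))^2)"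
      by (rule member_le_sum[where f="\<lambda>j. \<Sum>l\<in>I. (norm (f (Suc i) j l - f i j l))^2"])
        (use assms(2) in \<open>auto simp: I_def intro: sum_nonneg\<close>)
    finally show "(norm (f (Suc i) j l - f i j l))^2 \<le> \<dots>" .
  qed
  finally show ?thesis unfolding g_def I_def using assms(4)
    by (simp add: mult_left_mono add_pos_pos)
qed




lemma normalize_facts:
  fixes a b :: "'a::real_inner"
  assumes "norm a = 1" "norm (a - b) < 1"
  shows "b \<noteq> 0" "norm (b /\<^sub>R norm b) = 1" "b = norm b *\<^sub>R (b /\<^sub>R norm b)"
    "\<bar>1 - norm b\<bar> \<le> norm (a - b)"
    "norm (a - b /\<^sub>R norm b) \<le> 2 * norm (a - b)"
proof -
  have t: "\<bar>norm a - norm b\<bar> \<le> norm (a - b)" by (rule norm_triangle_ineq3)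
  then show b: "b \<noteq> 0" using assms by auto
  show "norm (b /\<^sub>R norm b) = 1" using b by simp
  show "b = norm b *\<^sub>R (b /\<^sub>R norm b)" using b by simp
  show "\<bar>1 - norm b\<bar> \<le> norm (a - b)" using t assms by simp
  have "b - b /\<^sub>R norm b = (norm b - 1) *\<^sub>R (b /\<^sub>R norm b)" using b
    by (simp add: algebra_simps)
  moreover have "norm ((norm b - 1) *\<^sub>R (b /\<^sub>R norm b)) = \<bar>1 - norm b\<bar>"
    using b by (simp only: norm_scaleR \<open>norm (b /\<^sub>R norm b) = 1\<close>) simp
  ultimately have "norm (b - b /\<^sub>R norm b) = \<bar>1 - norm b\<bar>" by simp
  moreover have "norm (a - b /\<^sub>R norm b) \<le> norm (a - b) + norm (b - b /\<^sub>R norm b)"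
    by (metis diff_add_cancel norm_triangle_ineq add_diff_eq)
  ultimately show "norm (a - b /\<^sub>R norm b) \<le> 2 * norm (a - b)" using t assms by simp
qed




lemma part2_point:
  fixes a b :: "'a::real_inner"
  assumes a: "norm a = 1" and u: "(norm (a - b))^2 \<le> u0" and u4: "u0 \<le> 1/4"
    and ue: "2 * u0 \<le> \<eta> * \<epsilon>" and "0 \<le> \<epsilon>" "0 \<le> \<eta>" "\<eta> \<le> 1"
  shows "(norm (a - b))^2 \<ge> (1 - \<epsilon>) * (norm (a - b /\<^sub>R norm b))^2
           + (1 - \<eta>) * (norm ((a - b) - (a - b /\<^sub>R norm b)))^2"
proof -
  have "norm (a - b) \<le> 1/2"
  proof (rule power2_le_imp_le)
    show "(norm (a - b))^2 \<le> (1/2)^2" using u u4 by (simp add: power2_eq_square)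
  qed simp
  then have lt: "norm (a - b) < 1" by simp
  note nf = normalize_facts[OF a lt]
  define \<rho> where "\<rho> = norm b"
  define v where "v = b /\<^sub>R \<rho>"
  have v1: "inner v v = 1" using nf(2) unfolding v_def \<rho>_def by (simp add: dot_square_norm)
  have a1: "inner a a = 1" using a by (simp add: dot_square_norm)
  have bv: "b = \<rho> *\<^sub>R v" unfolding v_def \<rho>_def by (rule nf(3))
  have rho: "\<rho> \<ge> 1/2" using nf(4) \<open>norm (a-b) \<le> 1/2\<close> unfolding \<rho>_def by linarith
  define E where "E = (norm (a - v))^2"
  have D1: "(norm (a - b))^2 = 1 - 2 * \<rho> * inner a v + \<rho>^2"
    unfolding bv power2_norm_eq_inner
    by (simp add: inner_diff_left inner_diff_right a1 v1 power2_eq_square inner_commute[of v a] algebra_simps)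
  have D2: "E = 2 - 2 * inner a v"
    unfolding E_def power2_norm_eq_inner
    by (simp add: inner_diff_left inner_diff_right a1 v1 inner_commute[of v a])
  have D: "(norm (a - b))^2 = \<rho> * E + (1 - \<rho>)^2"
    unfolding D1 D2 by (simp add: power2_eq_square algebra_simps)
  have T: "(norm ((a - b) - (a - v)))^2 = (1 - \<rho>)^2"
  proof -
    have "(a - b) - (a - v) = (1 - \<rho>) *\<^sub>R v" unfolding bv by (simp add: algebra_simps)
    then have "norm ((a - b) - (a - v)) = \<bar>1 - \<rho>\<bar>"
      using nf(2) unfolding v_def \<rho>_def by (simp only: norm_scaleR) simp
    then show ?thesis by simp
  qed
  have E0: "0 \<le> E" unfolding E_def by simp
  have key: "(norm (a - b))^2 \<ge> (1 - \<epsilon>) * E + (1 - \<eta>) * (1 - \<rho>)^2"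
  proof (cases "\<rho> \<ge> 1 - \<epsilon>")
    case True
    have "(1 - \<epsilon>) * E \<le> \<rho> * E" using True E0 by (simp add: mult_right_mono)
    moreover have "(1 - \<eta>) * (1 - \<rho>)^2 \<le> (1 - \<rho>)^2" using \<open>0 \<le> \<eta>\<close>
      using mult_right_mono[of "1 - \<eta>" 1 "(1 - \<rho>)^2"] by simp
    ultimately show ?thesis unfolding D by linarith
  next
    case False
    define t where "t = 1 - \<rho>"
    have tpos: "t > \<epsilon>" using False unfolding t_def by simp
    have "\<rho> * E \<le> u0" using D u zero_le_power2[of "1 - \<rho>"] by linarith
    moreover have "(1/2) * E \<le> \<rho> * E" using rho E0 by (rule mult_right_mono)
    ultimately have E2: "E \<le> 2 * u0" by linarith
    have "(t - \<epsilon>) * E \<le> t * E" using E0 \<open>0 \<le> \<epsilon>\<close> by (simp add: algebra_simps)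
    also have "\<dots> \<le> t * (2 * u0)" using E2 tpos \<open>0 \<le> \<epsilon>\<close> by (simp add: mult_left_mono)
    also have "\<dots> \<le> t * (\<eta> * \<epsilon>)" using ue tpos \<open>0 \<le> \<epsilon>\<close> by (simp add: mult_left_mono)
    also have "\<dots> \<le> t * (\<eta> * t)" using tpos \<open>0 \<le> \<epsilon>\<close> \<open>0 \<le> \<eta>\<close>
      by (intro mult_left_mono) auto
    finally have "(t - \<epsilon>) * E \<le> \<eta> * t^2" by (simp add: power2_eq_square algebra_simps)
    moreover have "(1 - \<epsilon>) * E + (1 - \<eta>) * (1 - \<rho>)^2 = \<rho> * E + (1 - \<rho>)^2 + ((t - \<epsilon>) * E - \<eta> * t^2)"
      unfolding t_def by (simp add: algebra_simps power2_eq_square)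
    ultimately show ?thesis unfolding D by linarith
  qed
  have T': "(norm ((a - b) - (a - b /\<^sub>R norm b)))^2 = (1 - \<rho>)^2" using T unfolding v_def \<rho>_def .
  have E': "(norm (a - b /\<^sub>R norm b))^2 = E" unfolding E_def v_def \<rho>_def ..
  show ?thesis unfolding T' E' by (rule key)
qed




lemma cident_lemma:
  fixes ap aq vp vq :: "'a::real_inner"
  assumes ap1: "inner ap ap = 1" and aq1: "inner aq aq = 1" and vp1: "inner vp vp = 1" and vq1: "inner vq vq = 1"
  shows "(\<rho>q - \<rho>p) + inner vq ((aq - \<rho>q *\<^sub>R vq) - (ap - \<rho>p *\<^sub>R vp)) =
   (1 - \<rho>p) * inner (aq - ap) (aq - ap) / 2 - inner (aq - vq) (aq - ap) + \<rho>p * inner (aq - ap) ((aq - vq) - (ap - vp))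
   - \<rho>p * inner ((aq - vq) - (ap - vp)) ((aq - vq) - (ap - vp)) / 2"
    apply (simp only: inner_diff_left inner_diff_right inner_scaleR_left inner_scaleR_right inner_add_left inner_add_right)
    apply (simp only: ap1 aq1 vp1 vq1 inner_commute[of aq ap] inner_commute[of vp ap] inner_commute[of vq ap]
        inner_commute[of vp aq] inner_commute[of vq aq] inner_commute[of vq vp])
    apply (simp add: field_simps)
    done

lemma fine:
  fixes ap aq dp dq :: "'a::real_inner"
  assumes a: "norm ap = 1" "norm aq = 1" and r: "norm dp \<le> R" "norm dq \<le> R" "R \<le> 1/4"
  shows "norm ((aq - (aq - dq) /\<^sub>R norm (aq - dq)) - (ap - (ap - dp) /\<^sub>R norm (ap - dp)))
           * (1 - 2 * norm (aq - ap) - 5 * R)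
         \<le> norm (dq - dp) + 2 * (norm dp + norm dq) * norm (aq - ap)"
proof -
  define bp where "bp = ap - dp"
  define bq where "bq = aq - dq"
  have ltp: "norm (ap - bp) < 1" using r unfolding bp_def by simp
  have ltq: "norm (aq - bq) < 1" using r unfolding bq_def by simp
  note nfp = normalize_facts[OF a(1) ltp]
  note nfq = normalize_facts[OF a(2) ltq]
  define \<rho>p where "\<rho>p = norm bp"
  define \<rho>q where "\<rho>q = norm bq"
  define vp where "vp = bp /\<^sub>R \<rho>p"
  define vq where "vq = bq /\<^sub>R \<rho>q"
  define ep where "ep = ap - vp"
  define eq where "eq = aq - vq"
  have goal_eq: "(aq - (aq - dq) /\<^sub>R norm (aq - dq)) - (ap - (ap - dp) /\<^sub>R norm (ap - dp)) = eq - ep"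
    unfolding eq_def ep_def vp_def vq_def \<rho>p_def \<rho>q_def bp_def bq_def ..
  have vp1: "inner vp vp = 1" using nfp(2) unfolding vp_def \<rho>p_def by (simp add: dot_square_norm)
  have vq1: "inner vq vq = 1" using nfq(2) unfolding vq_def \<rho>q_def by (simp add: dot_square_norm)
  have ap1: "inner ap ap = 1" using a by (simp add: dot_square_norm)
  have aq1: "inner aq aq = 1" using a by (simp add: dot_square_norm)
  have nvq: "norm vq = 1" using nfq(2) unfolding vq_def \<rho>q_def .
  have bpv: "bp = \<rho>p *\<^sub>R vp" unfolding vp_def \<rho>p_def by (rule nfp(3))
  have bqv: "bq = \<rho>q *\<^sub>R vq" unfolding vq_def \<rho>q_def by (rule nfq(3))
  have dpv: "dp = ap - \<rho>p *\<^sub>R vp" using bpv unfolding bp_def by (simp add: algebra_simps)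
  have dqv: "dq = aq - \<rho>q *\<^sub>R vq" using bqv unfolding bq_def by (simp add: algebra_simps)
  define \<tau> where "\<tau> = 1 - \<rho>p"
  have tau: "\<bar>\<tau>\<bar> \<le> norm dp" using nfp(4) unfolding \<tau>_def \<rho>p_def bp_def by simp
  have nep: "norm ep \<le> 2 * norm dp" using nfp(5) unfolding ep_def vp_def \<rho>p_def bp_def by simp
  have neq: "norm eq \<le> 2 * norm dq" using nfq(5) unfolding eq_def vq_def \<rho>q_def bq_def by simp
  have rho_le: "\<rho>p \<le> 5/4"
  proof -
    have "norm bp \<le> norm ap + norm dp" unfolding bp_def by (rule norm_triangle_ineq4)
    then show ?thesis using a r unfolding \<rho>p_def by simp
  qed
  have rho_ge: "0 \<le> \<rho>p" unfolding \<rho>p_def by simp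
  define Da where "Da = aq - ap"
  define Dd where "Dd = dq - dp"
  define De where "De = eq - ep"
  define Dv where "Dv = vq - vp"
  define c where "c = (\<rho>q - \<rho>p) + inner vq Dd"
  have ident: "De = (Dd - inner vq Dd *\<^sub>R vq) + c *\<^sub>R vq - \<tau> *\<^sub>R Dv"
  proof -
    have "(Dd - inner vq Dd *\<^sub>R vq) + c *\<^sub>R vq = Dd + (\<rho>q - \<rho>p) *\<^sub>R vq"
      unfolding c_def by (simp add: scaleR_add_left algebra_simps)
    also have "Dd + (\<rho>q - \<rho>p) *\<^sub>R vq - \<tau> *\<^sub>R Dv = De"
      unfolding Dd_def dpv dqv De_def eq_def ep_def \<tau>_def Dv_def
      by (simp add: algebra_simps)
    finally show ?thesis by simp
  qed
  have cident: "c = \<tau> * (norm Da)^2 / 2 - inner eq Da + \<rho>p * inner Da De - \<rho>p * (norm De)^2 / 2"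
    unfolding c_def \<tau>_def Da_def De_def eq_def ep_def Dd_def dqv dpv power2_norm_eq_inner
    using cident_lemma[OF ap1 aq1 vp1 vq1, of \<rho>q \<rho>p] by simp
  have proj: "norm (Dd - inner vq Dd *\<^sub>R vq) \<le> norm Dd"
  proof -
    have "(norm (Dd - inner vq Dd *\<^sub>R vq))^2 = (norm Dd)^2 - (inner vq Dd)^2"
      unfolding power2_norm_eq_inner
      by (simp add: inner_diff_left inner_diff_right inner_scaleR_left inner_scaleR_right
          vq1 inner_commute[of Dd vq] power2_eq_square algebra_simps)
    then have "(norm (Dd - inner vq Dd *\<^sub>R vq))^2 \<le> (norm Dd)^2" by simp
    then show ?thesis by (rule power2_le_imp_le) simp
  qed
  define na where "na = norm Da"
  define ne where "ne = norm De"
  define nd where "nd = norm Dd"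
  define rp where "rp = norm dp"
  define rq where "rq = norm dq"
  have nDv: "norm Dv \<le> na + ne"
  proof -
    have "Dv = Da - De" unfolding Dv_def Da_def De_def eq_def ep_def by (simp add: algebra_simps)
    then show ?thesis unfolding na_def ne_def by (simp add: norm_triangle_ineq4)
  qed
  have cb: "\<bar>c\<bar> \<le> \<bar>\<tau>\<bar> * na^2 / 2 + norm eq * na + \<rho>p * (na * ne) + \<rho>p * ne^2 / 2"
  proof -
    have i1: "\<bar>inner eq Da\<bar> \<le> norm eq * na" unfolding na_def by (rule Cauchy_Schwarz_ineq2)
    have i2: "\<bar>\<rho>p * inner Da De\<bar> \<le> \<rho>p * (na * ne)"
      unfolding na_def ne_def abs_mult using rho_ge
      by (simp add: mult_left_mono Cauchy_Schwarz_ineq2)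
    have i3: "\<bar>\<tau> * (norm Da)^2 / 2\<bar> = \<bar>\<tau>\<bar> * na^2 / 2" unfolding na_def by (simp add: abs_mult)
    have i4: "\<bar>\<rho>p * (norm De)^2 / 2\<bar> = \<rho>p * ne^2 / 2" unfolding ne_def using rho_ge by simp
    show ?thesis unfolding cident using i1 i2 i3 i4 by linarith
  qed
  have tri: "ne \<le> nd + \<bar>c\<bar> + \<bar>\<tau>\<bar> * norm Dv"
  proof -
    have t1: "norm ((Dd - inner vq Dd *\<^sub>R vq) + c *\<^sub>R vq - \<tau> *\<^sub>R Dv)
       \<le> norm ((Dd - inner vq Dd *\<^sub>R vq) + c *\<^sub>R vq) + norm (\<tau> *\<^sub>R Dv)"
      by (rule norm_triangle_ineq4)
    have t2: "norm ((Dd - inner vq Dd *\<^sub>R vq) + c *\<^sub>R vq) \<le> norm (Dd - inner vq Dd *\<^sub>R vq) + norm (c *\<^sub>R vq)"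
      by (rule norm_triangle_ineq)
    have "ne \<le> norm (Dd - inner vq Dd *\<^sub>R vq) + norm (c *\<^sub>R vq) + norm (\<tau> *\<^sub>R Dv)"
      unfolding ne_def ident using t1 t2 by linarith
    then show ?thesis using proj unfolding nd_def by (simp add: nvq)
  qed
  have rp: "rp \<le> R" "rq \<le> R" using r unfolding rp_def rq_def by auto
  have na2: "na \<le> 2"
  proof -
    have "na \<le> norm aq + norm ap" unfolding na_def Da_def by (rule norm_triangle_ineq4)
    then show ?thesis using a by simp
  qed
  have ne4: "ne \<le> 4 * R"
  proof -
    have "ne \<le> norm eq + norm ep" unfolding ne_def De_def by (rule norm_triangle_ineq4)
    then show ?thesis using nep neq rp unfolding rp_def rq_def by linarith
  qed
  have na0: "0 \<le> na" "0 \<le> ne" "0 \<le> nd" "0 \<le> rp" "0 \<le> rq"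
    unfolding na_def ne_def nd_def rp_def rq_def by auto
  have P1: "\<bar>\<tau>\<bar> * na^2 / 2 \<le> rp * na"
  proof -
    have "\<bar>\<tau>\<bar> * na^2 / 2 = (\<bar>\<tau>\<bar> * na) * (na / 2)" by (simp add: power2_eq_square)
    also have "\<dots> \<le> (rp * na) * 1"
      using tau na0 na2 unfolding rp_def by (intro mult_mono) (auto intro: mult_right_mono)
    finally show ?thesis by simp
  qed
  have P2: "norm eq * na \<le> 2 * rq * na" using neq na0 unfolding rq_def by (simp add: mult_right_mono)
  have P3: "\<rho>p * (na * ne) \<le> 2 * (na * ne)" using rho_le na0 by (intro mult_right_mono) auto
  have P4: "\<rho>p * ne^2 / 2 \<le> 4 * R * ne"
  proof -
    have "\<rho>p * ne^2 \<le> 2 * ne^2" using rho_le by (intro mult_right_mono) auto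
    then have "\<rho>p * ne^2 / 2 \<le> ne * ne" by (simp add: power2_eq_square)
    also have "\<dots> \<le> 4 * R * ne" using ne4 na0 by (simp add: mult_right_mono)
    finally show ?thesis .
  qed
  have P5: "\<bar>\<tau>\<bar> * norm Dv \<le> rp * na + R * ne"
  proof -
    have "\<bar>\<tau>\<bar> * norm Dv \<le> \<bar>\<tau>\<bar> * (na + ne)" using nDv by (simp add: mult_left_mono)
    also have "\<dots> = \<bar>\<tau>\<bar> * na + \<bar>\<tau>\<bar> * ne" by (simp add: algebra_simps)
    also have "\<bar>\<tau>\<bar> * na \<le> rp * na" using tau na0 unfolding rp_def by (simp add: mult_right_mono)
    also have "\<bar>\<tau>\<bar> * ne \<le> R * ne" using tau na0 rp unfolding rp_def by (simp add: mult_right_mono)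
    finally show ?thesis by simp
  qed
  have fin: "ne * (1 - 2 * na - 5 * R) \<le> nd + 2 * (rp + rq) * na"
  proof -
    have "ne * (1 - 2 * na - 5 * R) = ne - 2 * (na * ne) - 5 * (R * ne)" by (simp add: algebra_simps)
    moreover have "2 * (rp + rq) * na = 2 * (rp * na) + 2 * (rq * na)" by (simp add: algebra_simps)
    moreover have "4 * R * ne = 4 * (R * ne)" "2 * rq * na = 2 * (rq * na)" by simp_all
    ultimately show ?thesis using tri cb P1 P2 P3 P4 P5 by linarith
  qed
  show ?thesis unfolding goal_eq using fin
    unfolding ne_def De_def nd_def Dd_def rp_def rq_def na_def Da_def .
qed




lemma norm_div_sq: "h > 0 \<Longrightarrow> (norm (x /\<^sub>R h))^2 = (norm x)^2 / h^2"
  by (simp add: power_mult_distrib power_inverse divide_inverse mult.commute)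

lemma pd_fine:
  fixes ap aq bp bq :: "'a::real_inner"
  assumes a: "norm ap = 1" "norm aq = 1"
    and rp: "norm (ap - bp) \<le> \<epsilon>1" and rq: "norm (aq - bq) \<le> \<epsilon>1"
    and e1: "\<epsilon>1 = \<delta>1 / 120" and d1: "0 < \<delta>1" "\<delta>1 \<le> 1" "\<delta>1 \<le> \<delta>"
    and na: "norm (aq - ap) \<le> \<epsilon>1" "norm (aq - ap) \<le> Cs * h" and h: "h > 0"
  shows "(norm (((aq - bq /\<^sub>R norm bq) - (ap - bp /\<^sub>R norm bp)) /\<^sub>R h))^2
     \<le> (1 + \<delta>) * (norm (((aq - bq) - (ap - bp)) /\<^sub>R h))^2
       + (16 * (1 + 3/\<delta>1) * Cs^2) * ((norm (ap - bp))^2 + (norm (aq - bq))^2)"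
proof -
  have F: "norm ((aq - (aq - (aq - bq)) /\<^sub>R norm (aq - (aq - bq))) - (ap - (ap - (ap - bp)) /\<^sub>R norm (ap - (ap - bp))))
           * (1 - 2 * norm (aq - ap) - 5 * \<epsilon>1)
         \<le> norm ((aq - bq) - (ap - bp)) + 2 * (norm (ap - bp) + norm (aq - bq)) * norm (aq - ap)"
    by (rule fine[OF a rp rq]) (use e1 d1 in simp)
  define ne where "ne = norm ((aq - bq /\<^sub>R norm bq) - (ap - bp /\<^sub>R norm bp))"
  define nd where "nd = norm ((aq - bq) - (ap - bp))"
  define r1 where "r1 = norm (ap - bp)"
  define r2 where "r2 = norm (aq - bq)"
  define n where "n = norm (aq - ap)"
  define \<kappa> where "\<kappa> = 2 * n + 5 * \<epsilon>1"
  define X where "X = nd + 2 * (r1 + r2) * n"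
  have F': "ne * (1 - \<kappa>) \<le> X" using F unfolding ne_def nd_def r1_def r2_def n_def \<kappa>_def X_def
    by (simp add: algebra_simps)
  have pos: "0 \<le> ne" "0 \<le> nd" "0 \<le> r1" "0 \<le> r2" "0 \<le> n"
    unfolding ne_def nd_def r1_def r2_def n_def by auto
  have k1: "\<kappa> \<le> 7 * \<delta>1 / 120" using na(1) e1 unfolding \<kappa>_def n_def by simp
  have k0: "0 \<le> \<kappa>" using pos e1 d1 unfolding \<kappa>_def by simp
  have km: "1 - \<kappa> > 0" using k1 d1 by simp
  have "(ne * (1 - \<kappa>))^2 \<le> X^2"
    using F' pos km by (intro power_mono) auto
  then have s1: "ne^2 * (1 - \<kappa>)^2 \<le> X^2" by (simp add: power_mult_distrib)
  have c1: "1 \<le> (1 + 4 * \<kappa>) * (1 - \<kappa>)^2"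
  proof -
    have "(1 + 4 * \<kappa>) * (1 - \<kappa>)^2 = 1 + \<kappa> * (2 - 7 * \<kappa> + 4 * \<kappa>^2)"
      by (simp add: power2_eq_square algebra_simps)
    moreover have "0 \<le> \<kappa> * (2 - 7 * \<kappa> + 4 * \<kappa>^2)" using k0 k1 d1
      by (intro mult_nonneg_nonneg) auto
    ultimately show ?thesis by simp
  qed
  have s2: "ne^2 \<le> (1 + \<delta>1/3) * X^2"
  proof -
    have "ne^2 \<le> ne^2 * ((1 + 4 * \<kappa>) * (1 - \<kappa>)^2)" using c1
      by (simp add: mult_le_cancel_left1)
    also have "\<dots> = (1 + 4 * \<kappa>) * (ne^2 * (1 - \<kappa>)^2)" by (simp add: algebra_simps)
    also have "\<dots> \<le> (1 + 4 * \<kappa>) * X^2" using s1 k0 by (intro mult_left_mono) auto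
    also have "\<dots> \<le> (1 + \<delta>1/3) * X^2" using k1 d1 by (intro mult_right_mono) auto
    finally show ?thesis .
  qed
  define Y where "Y = 2 * (r1 + r2) * n"
  have s3: "X^2 \<le> (1 + \<delta>1/3) * nd^2 + (1 + 3/\<delta>1) * Y^2"
  proof -
    have "0 \<le> (\<delta>1/3) * (nd - (3/\<delta>1) * Y)^2" using d1 by simp
    also have "(\<delta>1/3) * (nd - (3/\<delta>1) * Y)^2 = (\<delta>1/3) * nd^2 - 2 * nd * Y + (3/\<delta>1) * Y^2"
      using d1 by (simp add: power2_eq_square field_simps)
    finally have "2 * nd * Y \<le> (\<delta>1/3) * nd^2 + (3/\<delta>1) * Y^2" by simp
    moreover have "X^2 = nd^2 + 2 * nd * Y + Y^2" unfolding X_def Y_def by (simp add: power2_eq_square algebra_simps)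
    ultimately show ?thesis by (simp add: algebra_simps)
  qed
  have s4: "Y^2 \<le> 8 * (r1^2 + r2^2) * (Cs^2 * h^2)"
  proof -
    have "Y^2 = 4 * (r1 + r2)^2 * n^2" unfolding Y_def by (simp add: power2_eq_square algebra_simps)
    also have "(r1 + r2)^2 \<le> 2 * (r1^2 + r2^2)"
    proof -
      have "(r1 + r2)^2 + (r1 - r2)^2 = 2 * (r1^2 + r2^2)" by (simp add: power2_eq_square algebra_simps)
      then show ?thesis using zero_le_power2[of "r1 - r2"] by linarith
    qed
    then have "4 * (r1 + r2)^2 * n^2 \<le> 4 * (2 * (r1^2 + r2^2)) * n^2"
      by (intro mult_right_mono) auto
    also have "n^2 \<le> (Cs * h)^2" using na(2) pos unfolding n_def by (intro power_mono) auto
    then have "4 * (2 * (r1^2 + r2^2)) * n^2 \<le> 4 * (2 * (r1^2 + r2^2)) * (Cs * h)^2"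
      by (intro mult_left_mono) auto
    finally show ?thesis by (simp add: power_mult_distrib algebra_simps)
  qed
  have A: "(1 + \<delta>1/3) * (1 + \<delta>1/3) \<le> 1 + \<delta>"
  proof -
    have "\<delta>1 * \<delta>1 \<le> \<delta>1" using d1 by (intro mult_right_le_one_le) auto
    moreover have "(1 + \<delta>1/3) * (1 + \<delta>1/3) = 1 + 2 * \<delta>1 / 3 + (\<delta>1 * \<delta>1) / 9"
      by (simp add: algebra_simps)
    ultimately show ?thesis using d1 by linarith
  qed
  have "(1 + \<delta>1/3) * X^2 \<le> (1 + \<delta>1/3) * ((1 + \<delta>1/3) * nd^2 + (1 + 3/\<delta>1) * Y^2)"
    by (rule mult_left_mono[OF s3]) (use d1 in simp)
  then have "ne^2 \<le> (1 + \<delta>1/3) * ((1 + \<delta>1/3) * nd^2 + (1 + 3/\<delta>1) * Y^2)"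
    using s2 by linarith
  also have "\<dots> = ((1 + \<delta>1/3) * (1 + \<delta>1/3)) * nd^2 + (1 + \<delta>1/3) * ((1 + 3/\<delta>1) * Y^2)"
    by (subst distrib_left) (simp only: mult.assoc)
  also have "((1 + \<delta>1/3) * (1 + \<delta>1/3)) * nd^2 \<le> (1 + \<delta>) * nd^2"
    using A by (intro mult_right_mono) auto
  also have "(1 + \<delta>1/3) * ((1 + 3/\<delta>1) * Y^2) \<le> 2 * ((1 + 3/\<delta>1) * Y^2)"
    using d1 by (intro mult_right_mono) auto
  also have "2 * ((1 + 3/\<delta>1) * Y^2) \<le> 2 * ((1 + 3/\<delta>1) * (8 * (r1^2 + r2^2) * (Cs^2 * h^2)))"
    using s4 d1 by (intro mult_left_mono) auto
  finally have G: "ne^2 \<le> (1 + \<delta>) * nd^2 + (16 * (1 + 3/\<delta>1) * Cs^2) * (r1^2 + r2^2) * h^2"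
    by (simp add: algebra_simps add_divide_distrib)
  have "ne^2 / h^2 \<le> (1 + \<delta>) * (nd^2 / h^2) + (16 * (1 + 3/\<delta>1) * Cs^2) * (r1^2 + r2^2)"
    using G h by (simp add: field_simps)
  then show ?thesis using h unfolding norm_div_sq[OF h] ne_def nd_def r1_def r2_def by simp
qed

lemma pd_crude:
  fixes ap aq bp bq :: "'a::real_inner"
  assumes a: "norm ap = 1" "norm aq = 1"
    and rp: "norm (ap - bp) \<le> 1/2" and rq: "norm (aq - bq) \<le> 1/2"
    and h: "h \<ge> hq" "hq > 0" and Q: "8 / hq^2 \<le> Q" and "0 \<le> \<delta>"
  shows "(norm (((aq - bq /\<^sub>R norm bq) - (ap - bp /\<^sub>R norm bp)) /\<^sub>R h))^2
     \<le> (1 + \<delta>) * (norm (((aq - bq) - (ap - bp)) /\<^sub>R h))^2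
       + Q * ((norm (ap - bp))^2 + (norm (aq - bq))^2)"
proof -
  have "norm (ap - bp) < 1" "norm (aq - bq) < 1" using rp rq by auto
  note n1 = normalize_facts(5)[OF a(1) this(1)] and n2 = normalize_facts(5)[OF a(2) this(2)]
  define r1 where "r1 = norm (ap - bp)"
  define r2 where "r2 = norm (aq - bq)"
  define ne where "ne = norm ((aq - bq /\<^sub>R norm bq) - (ap - bp /\<^sub>R norm bp))"
  have "ne \<le> norm (aq - bq /\<^sub>R norm bq) + norm (ap - bp /\<^sub>R norm bp)"
    unfolding ne_def by (rule norm_triangle_ineq4)
  then have ne: "ne \<le> 2 * r1 + 2 * r2" using n1 n2 unfolding r1_def r2_def by simp
  have pos: "0 \<le> ne" "0 \<le> r1" "0 \<le> r2" unfolding ne_def r1_def r2_def by auto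
  have "ne^2 \<le> (2 * r1 + 2 * r2)^2" using ne pos by (intro power_mono) auto
  also have "\<dots> \<le> 8 * (r1^2 + r2^2)"
  proof -
    have "(2 * r1 + 2 * r2)^2 + 4 * (r1 - r2)^2 = 8 * (r1^2 + r2^2)" by (simp add: power2_eq_square algebra_simps)
    then show ?thesis using zero_le_power2[of "r1 - r2"] by linarith
  qed
  finally have ne2: "ne^2 \<le> 8 * (r1^2 + r2^2)" .
  have hp: "h > 0" using h by simp
  have "ne^2 / h^2 \<le> 8 * (r1^2 + r2^2) / h^2" using ne2 hp by (simp add: divide_right_mono)
  also have "\<dots> = (8 / h^2) * (r1^2 + r2^2)" by simp
  also have "\<dots> \<le> (8 / hq^2) * (r1^2 + r2^2)"
    using h pos by (intro mult_right_mono divide_left_mono power_mono) auto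
  also have "\<dots> \<le> Q * (r1^2 + r2^2)" using Q by (intro mult_right_mono) auto
  finally have "ne^2 / h^2 \<le> Q * (r1^2 + r2^2)" .
  moreover have "0 \<le> (1 + \<delta>) * (norm (((aq - bq) - (ap - bp)) /\<^sub>R h))^2" using \<open>0 \<le> \<delta>\<close> by simp
  ultimately show ?thesis unfolding norm_div_sq[OF hp] ne_def r1_def r2_def by linarith
qed




lemma pow_mono_le: "0 < (\<sigma>::real) \<Longrightarrow> \<sigma> \<le> 1 \<Longrightarrow> m \<le> n \<Longrightarrow> \<sigma>^n \<le> \<sigma>^m"
  by (rule power_decreasing) auto

lemma lvl_arith:
  fixes \<sigma> B Bp P W iN :: real
  assumes s: "0 < \<sigma>" "\<sigma> \<le> 1" and B: "0 \<le> B" "0 \<le> Bp"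
    and P: "P \<le> Bp * \<sigma>^m" "0 \<le> P" and W: "W \<le> B * \<sigma>^14" "0 \<le> W"
    and iN: "iN \<le> B * \<sigma>^8" "0 \<le> iN"
    and e: "j + m = t" "t + j \<le> 14" "m + 8 \<ge> t"
  shows "P * iN + \<sigma>^j * P + (1 + 1/\<sigma>^j) * W \<le> (Bp * B + Bp + 2 * B) * \<sigma>^t"
proof -
  have t1: "P * iN \<le> (Bp * \<sigma>^m) * (B * \<sigma>^8)" using P iN B s by (intro mult_mono) auto
  also have "\<dots> = Bp * B * \<sigma>^(m+8)" by (simp add: power_add)
  also have "\<dots> \<le> Bp * B * \<sigma>^t" using s B e by (intro mult_left_mono pow_mono_le) auto
  finally have T1: "P * iN \<le> Bp * B * \<sigma>^t" .
  have "\<sigma>^j * P \<le> \<sigma>^j * (Bp * \<sigma>^m)" using P s by (intro mult_left_mono) auto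
  also have "\<dots> = Bp * \<sigma>^t" using e by (simp add: power_add[symmetric] algebra_simps)
  finally have T2: "\<sigma>^j * P \<le> Bp * \<sigma>^t" .
  have "B * \<sigma>^14 \<le> B * \<sigma>^t" using s B e by (intro mult_left_mono pow_mono_le) auto
  then have T3: "W \<le> B * \<sigma>^t" using W by linarith
  have "W / \<sigma>^j \<le> B * \<sigma>^14 / \<sigma>^j" using W s by (intro divide_right_mono) auto
  also have "\<dots> = B * \<sigma>^(14 - j)"
  proof -
    have "\<sigma>^14 = \<sigma>^(14 - j) * \<sigma>^j" using e by (simp add: power_add[symmetric])
    then show ?thesis using s by simp
  qed
  also have "\<dots> \<le> B * \<sigma>^t" using s B e by (intro mult_left_mono pow_mono_le) auto
  finally have T4: "W / \<sigma>^j \<le> B * \<sigma>^t" .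
  have "(1 + 1/\<sigma>^j) * W = W + W / \<sigma>^j" by (simp add: algebra_simps)
  then show ?thesis using T1 T2 T3 T4 by (simp add: algebra_simps)
qed




lemma shift3:
  fixes r :: "nat \<Rightarrow> nat \<Rightarrow> nat \<Rightarrow> real"
  assumes N: "N \<ge> 1"
    and cl: "\<And>i j l. i \<le> N+1 \<Longrightarrow> j \<le> N+1 \<Longrightarrow> l \<le> N+1 \<Longrightarrow> r i j l = r (clampi N i) (clampi N j) (clampi N l)"
    and nn: "\<And>i j l. 0 \<le> r i j l"
  shows "(\<Sum>i\<in>{1..N}. \<Sum>j\<in>{1..N}. \<Sum>l\<in>{1..N}. r (Suc i) j l) \<le> 2 * (\<Sum>i\<in>{1..N}. \<Sum>j\<in>{1..N}. \<Sum>l\<in>{1..N}. r i j l)"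
    and "(\<Sum>i\<in>{1..N}. \<Sum>j\<in>{1..N}. \<Sum>l\<in>{1..N}. r i (Suc j) l) \<le> 2 * (\<Sum>i\<in>{1..N}. \<Sum>j\<in>{1..N}. \<Sum>l\<in>{1..N}. r i j l)"
    and "(\<Sum>i\<in>{1..N}. \<Sum>j\<in>{1..N}. \<Sum>l\<in>{1..N}. r i j (Suc l)) \<le> 2 * (\<Sum>i\<in>{1..N}. \<Sum>j\<in>{1..N}. \<Sum>l\<in>{1..N}. r i j l)"
proof -
  have cN: "clampi N (Suc N) = N" "clampi N N = N" using N by (auto simp: clampi_def)
  have cI: "clampi N x = x" if "x \<in> {1..N}" for x using that by (auto simp: clampi_def)
  have gx: "r (Suc N) j l = r N j l" if "j \<in> {1..N}" "l \<in> {1..N}" for j l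
  proof -
    have "r (Suc N) j l = r (clampi N (Suc N)) (clampi N j) (clampi N l)" by (rule cl) (use that in auto)
    also have "\<dots> = r N j l" using that by (simp only: cN cI)
    finally show ?thesis .
  qed
  have gy: "r i (Suc N) l = r i N l" if "i \<in> {1..N}" "l \<in> {1..N}" for i l
  proof -
    have "r i (Suc N) l = r (clampi N i) (clampi N (Suc N)) (clampi N l)" by (rule cl) (use that in auto)
    also have "\<dots> = r i N l" using that by (simp only: cN cI)
    finally show ?thesis .
  qed
  have gz: "r i j (Suc N) = r i j N" if "i \<in> {1..N}" "j \<in> {1..N}" for i j
  proof -
    have "r i j (Suc N) = r (clampi N i) (clampi N j) (clampi N (Suc N))" by (rule cl) (use that in auto)
    also have "\<dots> = r i j N" using that by (simp only: cN cI)
    finally show ?thesis .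
  qed
  have A: "(\<Sum>i\<in>{1..N}. (\<lambda>i. \<Sum>j\<in>{1..N}. \<Sum>l\<in>{1..N}. r i j l) (Suc i))
      \<le> 2 * (\<Sum>i\<in>{1..N}. (\<lambda>i. \<Sum>j\<in>{1..N}. \<Sum>l\<in>{1..N}. r i j l) i)"
  proof (rule shift1[OF N])
    show "\<forall>i\<in>{1..N}. 0 \<le> (\<Sum>j\<in>{1..N}. \<Sum>l\<in>{1..N}. r i j l)" by (simp add: sum_nonneg nn)
    have "(\<Sum>j\<in>{1..N}. \<Sum>l\<in>{1..N}. r (Suc N) j l) = (\<Sum>j\<in>{1..N}. \<Sum>l\<in>{1..N}. r N j l)"
    proof (rule sum.cong[OF refl])
      fix j assume j: "j \<in> {1..N}"
      show "(\<Sum>l\<in>{1..N}. r (Suc N) j l) = (\<Sum>l\<in>{1..N}. r N j l)"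
        by (rule sum.cong[OF refl]) (use gx j in auto)
    qed
    then show "(\<lambda>i. \<Sum>j\<in>{1..N}. \<Sum>l\<in>{1..N}. r i j l) (Suc N) = (\<lambda>i. \<Sum>j\<in>{1..N}. \<Sum>l\<in>{1..N}. r i j l) N"
      by simp
  qed
  then show "(\<Sum>i\<in>{1..N}. \<Sum>j\<in>{1..N}. \<Sum>l\<in>{1..N}. r (Suc i) j l) \<le> 2 * (\<Sum>i\<in>{1..N}. \<Sum>j\<in>{1..N}. \<Sum>l\<in>{1..N}. r i j l)"
    by simp
  show "(\<Sum>i\<in>{1..N}. \<Sum>j\<in>{1..N}. \<Sum>l\<in>{1..N}. r i (Suc j) l) \<le> 2 * (\<Sum>i\<in>{1..N}. \<Sum>j\<in>{1..N}. \<Sum>l\<in>{1..N}. r i j l)"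
    apply (subst sum_distrib_left)
  proof (rule sum_mono)
    fix i assume i: "i \<in> {1..N}"
    have "(\<Sum>j\<in>{1..N}. (\<lambda>j. \<Sum>l\<in>{1..N}. r i j l) (Suc j)) \<le> 2 * (\<Sum>j\<in>{1..N}. (\<lambda>j. \<Sum>l\<in>{1..N}. r i j l) j)"
    proof (rule shift1[OF N])
      show "\<forall>j\<in>{1..N}. 0 \<le> (\<Sum>l\<in>{1..N}. r i j l)" by (simp add: sum_nonneg nn)
      show "(\<lambda>j. \<Sum>l\<in>{1..N}. r i j l) (Suc N) = (\<lambda>j. \<Sum>l\<in>{1..N}. r i j l) N"
      proof -
        have "(\<Sum>l\<in>{1..N}. r i (Suc N) l) = (\<Sum>l\<in>{1..N}. r i N l)"
          by (rule sum.cong[OF refl]) (use gy i in auto)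
        then show ?thesis by simp
      qed
    qed
    then show "(\<Sum>j\<in>{1..N}. \<Sum>l\<in>{1..N}. r i (Suc j) l) \<le> 2 * (\<Sum>j\<in>{1..N}. \<Sum>l\<in>{1..N}. r i j l)"
      by simp
  qed
  show "(\<Sum>i\<in>{1..N}. \<Sum>j\<in>{1..N}. \<Sum>l\<in>{1..N}. r i j (Suc l)) \<le> 2 * (\<Sum>i\<in>{1..N}. \<Sum>j\<in>{1..N}. \<Sum>l\<in>{1..N}. r i j l)"
    apply (subst sum_distrib_left)
  proof (rule sum_mono)
    fix i assume i: "i \<in> {1..N}"
    show "(\<Sum>j\<in>{1..N}. \<Sum>l\<in>{1..N}. r i j (Suc l)) \<le> 2 * (\<Sum>j\<in>{1..N}. \<Sum>l\<in>{1..N}. r i j l)"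
      apply (subst sum_distrib_left)
    proof (rule sum_mono)
    fix j assume "j \<in> {1..N}"
    then show "(\<Sum>l\<in>{1..N}. r i j (Suc l)) \<le> 2 * (\<Sum>l\<in>{1..N}. r i j l)"
      using i by (intro shift1[OF N]) (auto simp: nn gz)
  qed
  qed
qed




lemma linf:
  fixes f :: "nat \<Rightarrow> nat \<Rightarrow> nat \<Rightarrow> 'a::real_inner"
  assumes s: "0 < \<sigma>" "\<sigma> \<le> 1" and B: "0 \<le> B"
    and U: "(\<Sum>i\<in>{1..N}. \<Sum>j\<in>{1..N}. \<Sum>l\<in>{1..N}. (norm (f i j l))^2) \<le> B * \<sigma>^6"
    and Wx: "(\<Sum>i\<in>{1..N}. \<Sum>j\<in>{1..N}. \<Sum>l\<in>{1..N}. (norm (f (Suc i) j l - f i j l))^2) \<le> B * \<sigma>^14"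
    and Wy: "(\<Sum>i\<in>{1..N}. \<Sum>j\<in>{1..N}. \<Sum>l\<in>{1..N}. (norm (f i (Suc j) l - f i j l))^2) \<le> B * \<sigma>^14"
    and Wz: "(\<Sum>i\<in>{1..N}. \<Sum>j\<in>{1..N}. \<Sum>l\<in>{1..N}. (norm (f i j (Suc l) - f i j l))^2) \<le> B * \<sigma>^14"
    and iN: "1 / real N \<le> B * \<sigma>^8"
    and p: "i \<in> {1..N}" "j \<in> {1..N}" "l \<in> {1..N}"
  shows "(norm (f i j l))^2 \<le>
    (((B * B + B + 2 * B) * B + (B * B + B + 2 * B) + 2 * B) * B + ((B * B + B + 2 * B) * B + (B * B + B + 2 * B) + 2 * B) + 2 * B) * \<sigma>^13"
proof -
  define I where "I = {1..N}"
  define B1 where "B1 = B * B + B + 2 * B"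
  define B2 where "B2 = B1 * B + B1 + 2 * B"
  have B12: "0 \<le> B1" "0 \<le> B2" using B unfolding B1_def B2_def by auto
  have iN0: "0 \<le> 1 / real N" by simp
  have W0: "0 \<le> (\<Sum>i\<in>I. \<Sum>j\<in>I. \<Sum>l\<in>I. (norm (f i j (Suc l) - f i j l))^2)"
           "0 \<le> (\<Sum>i\<in>I. \<Sum>j\<in>I. \<Sum>l\<in>I. (norm (f i (Suc j) l - f i j l))^2)"
           "0 \<le> (\<Sum>i\<in>I. \<Sum>j\<in>I. \<Sum>l\<in>I. (norm (f (Suc i) j l - f i j l))^2)"
    by (auto intro!: sum_nonneg)
  have U0: "0 \<le> (\<Sum>i\<in>I. \<Sum>j\<in>I. \<Sum>l\<in>I. (norm (f i j l))^2)" by (auto intro!: sum_nonneg)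
  have Pb: "(\<Sum>i\<in>I. \<Sum>j\<in>I. (norm (f i j l))^2) \<le> B1 * \<sigma>^10"
  proof -
    have "(\<Sum>i\<in>I. \<Sum>j\<in>I. (norm (f i j l))^2) \<le>
      (\<Sum>i\<in>I. \<Sum>j\<in>I. \<Sum>l\<in>I. (norm (f i j l))^2) * (1 / real N)
      + \<sigma>^4 * (\<Sum>i\<in>I. \<Sum>j\<in>I. \<Sum>l\<in>I. (norm (f i j l))^2)
      + (1 + 1/\<sigma>^4) * (\<Sum>i\<in>I. \<Sum>j\<in>I. \<Sum>l\<in>I. (norm (f i j (Suc l) - f i j l))^2)"
      using level_z[OF p(3), of "\<sigma>^4" f] s unfolding I_def by simp
    also have "\<dots> \<le> (B * B + B + 2 * B) * \<sigma>^10"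
      by (rule lvl_arith[OF s B B _ U0 _ W0(1) iN iN0, where m=6])
        (use U Wz in \<open>auto simp: I_def\<close>)
    finally show ?thesis unfolding B1_def .
  qed
  have Pb0: "0 \<le> (\<Sum>i\<in>I. \<Sum>j\<in>I. (norm (f i j l))^2)" by (auto intro!: sum_nonneg)
  have Fb: "(\<Sum>i\<in>I. (norm (f i j l))^2) \<le> B2 * \<sigma>^12"
  proof -
    have "(\<Sum>i\<in>I. (norm (f i j l))^2) \<le>
      (\<Sum>i\<in>I. \<Sum>j\<in>I. (norm (f i j l))^2) * (1 / real N)
      + \<sigma>^2 * (\<Sum>i\<in>I. \<Sum>j\<in>I. (norm (f i j l))^2)
      + (1 + 1/\<sigma>^2) * (\<Sum>i\<in>I. \<Sum>j\<in>I. \<Sum>l\<in>I. (norm (f i (Suc j) l - f i j l))^2)"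
      using level_y[OF p(2) p(3), of "\<sigma>^2" f] s unfolding I_def by simp
    also have "\<dots> \<le> B2 * \<sigma>^12"
      unfolding B2_def
      by (rule lvl_arith[OF s B B12(1) Pb Pb0 _ W0(2) iN iN0]) (use Wy in \<open>auto simp: I_def\<close>)
    finally show ?thesis .
  qed
  have Fb0: "0 \<le> (\<Sum>i\<in>I. (norm (f i j l))^2)" by (auto intro!: sum_nonneg)
  have "(norm (f i j l))^2 \<le>
      (\<Sum>i\<in>I. (norm (f i j l))^2) * (1 / real N)
      + \<sigma>^1 * (\<Sum>i\<in>I. (norm (f i j l))^2)
      + (1 + 1/\<sigma>^1) * (\<Sum>i\<in>I. \<Sum>j\<in>I. \<Sum>l\<in>I. (norm (f (Suc i) j l - f i j l))^2)"
    using level_x[OF p, of \<sigma> f] s unfolding I_def by simp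
  also have "\<dots> \<le> (B2 * B + B2 + 2 * B) * \<sigma>^13"
    by (rule lvl_arith[OF s B B12(2) Fb Fb0 _ W0(3) iN iN0]) (use Wx in \<open>auto simp: I_def\<close>)
  finally show ?thesis unfolding B2_def B1_def .
qed




definition B3f :: "real \<Rightarrow> real" where
  "B3f B = (((B * B + B + 2 * B) * B + (B * B + B + 2 * B) + 2 * B) * B + ((B * B + B + 2 * B) * B + (B * B + B + 2 * B) + 2 * B) + 2 * B)"

lemma kpow: "0 < k \<Longrightarrow> (k powr (1/8)) ^ n = k powr (real n / 8)"
proof -
  assume k: "0 < k"
  have "(k powr (1/8)) ^ n = (k powr (1/8)) powr (real n)" using k by (simp add: powr_realpow)
  also have "\<dots> = k powr (1/8 * real n)" by (rule powr_powr)
  finally show ?thesis by simp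
qed

lemma sqrt_le_sq: assumes "0 \<le> x" "sqrt x \<le> y" shows "x \<le> y^2"
proof -
  have "(sqrt x)^2 \<le> y^2" using assms by (intro power_mono) auto
  then show ?thesis using assms by simp
qed

lemma pd_all:
  fixes ap aq bp bq :: "'a::real_inner"
  assumes a: "norm ap = 1" "norm aq = 1" and na: "norm (aq - ap) \<le> Cs * h"
    and rp: "(norm (ap - bp))^2 \<le> R2" and rq: "(norm (aq - bq))^2 \<le> R2"
    and R2: "R2 \<le> 1/4" "R2 \<le> B3 * C2 * h" and h: "h > 0"
    and pos: "Cs > 0" "B3 > 0" "C2 > 0" "\<delta> > 0"
    and d1: "\<delta>1 = min \<delta> 1" and e1: "\<epsilon>1 = \<delta>1 / 120"
    and hq: "hq = min (\<epsilon>1 / (Cs + 1)) (\<epsilon>1^2 / (B3 * C2 + 1))"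
    and Q: "Q = 16 * (1 + 3/\<delta>1) * Cs^2 + 8 / hq^2"
  shows "(norm (((aq - bq /\<^sub>R norm bq) - (ap - bp /\<^sub>R norm bp)) /\<^sub>R h))^2
     \<le> (1 + \<delta>) * (norm (((aq - bq) - (ap - bp)) /\<^sub>R h))^2
       + Q * ((norm (ap - bp))^2 + (norm (aq - bq))^2)"
proof -
  have d1p: "0 < \<delta>1" "\<delta>1 \<le> 1" "\<delta>1 \<le> \<delta>" using d1 pos by auto
  have e1p: "0 < \<epsilon>1" using e1 d1p by simp
  have hqp: "0 < hq" using hq e1p pos by (simp add: add_pos_pos)
  have S0: "0 \<le> (norm (ap - bp))^2 + (norm (aq - bq))^2" by simp
  show ?thesis
  proof (cases "h \<le> hq")
    case True
    have "B3 * C2 * h \<le> B3 * C2 * hq" using True pos by (simp add: mult_left_mono)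
    also have "hq \<le> \<epsilon>1^2 / (B3 * C2 + 1)" using hq by simp
    then have "B3 * C2 * hq \<le> B3 * C2 * (\<epsilon>1^2 / (B3 * C2 + 1))" using pos by (intro mult_left_mono) auto
    also have "\<dots> \<le> \<epsilon>1^2"
    proof -
      have "B3 * C2 \<le> B3 * C2 + 1" by simp
      moreover have "0 < B3 * C2 + 1" using pos by (simp add: add_pos_pos)
      ultimately have "B3 * C2 / (B3 * C2 + 1) \<le> 1" by (simp add: divide_le_eq_1)
      then have "(B3 * C2 / (B3 * C2 + 1)) * \<epsilon>1^2 \<le> 1 * \<epsilon>1^2" by (intro mult_right_mono) auto
      then show ?thesis by simp
    qed
    finally have R2e: "R2 \<le> \<epsilon>1^2" using R2 by linarith
    have "(norm (ap - bp))^2 \<le> \<epsilon>1^2" using rp R2e by linarith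
    from power2_le_imp_le[OF this] have np: "norm (ap - bp) \<le> \<epsilon>1" using e1p by simp
    have "(norm (aq - bq))^2 \<le> \<epsilon>1^2" using rq R2e by linarith
    from power2_le_imp_le[OF this] have nq: "norm (aq - bq) \<le> \<epsilon>1" using e1p by simp
    have "Cs * h \<le> Cs * hq" using True pos by simp
    also have "hq \<le> \<epsilon>1 / (Cs + 1)" using hq by simp
    then have "Cs * hq \<le> Cs * (\<epsilon>1 / (Cs + 1))" using pos by (intro mult_left_mono) auto
    also have "\<dots> \<le> \<epsilon>1"
    proof -
      have "Cs / (Cs + 1) \<le> 1" using pos by simp
      then have "(Cs / (Cs + 1)) * \<epsilon>1 \<le> 1 * \<epsilon>1" using e1p by (intro mult_right_mono) auto
      then show ?thesis by simp
    qed
    finally have nae: "norm (aq - ap) \<le> \<epsilon>1" using na by linarith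
    have F: "(norm (((aq - bq /\<^sub>R norm bq) - (ap - bp /\<^sub>R norm bp)) /\<^sub>R h))^2
     \<le> (1 + \<delta>) * (norm (((aq - bq) - (ap - bp)) /\<^sub>R h))^2
       + (16 * (1 + 3/\<delta>1) * Cs^2) * ((norm (ap - bp))^2 + (norm (aq - bq))^2)"
      by (rule pd_fine[OF a np nq e1 d1p nae na h])
    have "(16 * (1 + 3/\<delta>1) * Cs^2) * ((norm (ap - bp))^2 + (norm (aq - bq))^2)
        \<le> Q * ((norm (ap - bp))^2 + (norm (aq - bq))^2)"
      using Q S0 by (intro mult_right_mono) auto
    then show ?thesis using F by linarith
  next
    case False
    have np: "norm (ap - bp) \<le> 1/2" by (rule power2_le_imp_le) (use rp R2 in \<open>auto simp: power2_eq_square\<close>)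
    have nq: "norm (aq - bq) \<le> 1/2" by (rule power2_le_imp_le) (use rq R2 in \<open>auto simp: power2_eq_square\<close>)
    have Qb: "8 / hq^2 \<le> Q" using Q d1p by simp
    show ?thesis
      by (rule pd_crude[OF a np nq _ hqp Qb]) (use False pos in auto)
  qed
qed




lemma sq_sqrt_sum: "0 \<le> x \<Longrightarrow> (sqrt x)^2 = x" by simp

lemma part2_sum:
  fixes a b :: gridfun
  assumes pt: "\<And>i j l. i \<in> {1..N} \<Longrightarrow> j \<in> {1..N} \<Longrightarrow> l \<in> {1..N} \<Longrightarrow>
       norm (a i j l) = 1 \<and> (norm (a i j l - b i j l))^2 \<le> u0"
    and "u0 \<le> 1/4" "2 * u0 \<le> \<eta> * \<epsilon>" "0 \<le> \<epsilon>" "0 \<le> \<eta>" "\<eta> \<le> 1"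
  shows "(l2norm N (\<lambda>i j l. a i j l - b i j l))^2 \<ge>
     (1 - \<epsilon>) * (l2norm N (\<lambda>i j l. a i j l - gnormalize b i j l))^2
     + (1 - \<eta>) * (l2norm N (\<lambda>i j l. (a i j l - b i j l) - (a i j l - gnormalize b i j l)))^2"
proof -
  define I where "I = {1..N}"
  define g where "g = gh N ^ 3"
  have g0: "0 \<le> g" unfolding g_def gh_def by simp
  define D where "D = (\<Sum>i\<in>I. \<Sum>j\<in>I. \<Sum>l\<in>I. (norm (a i j l - b i j l))^2)"
  define E where "E = (\<Sum>i\<in>I. \<Sum>j\<in>I. \<Sum>l\<in>I. (norm (a i j l - gnormalize b i j l))^2)"
  define T where "T = (\<Sum>i\<in>I. \<Sum>j\<in>I. \<Sum>l\<in>I. (norm ((a i j l - b i j l) - (a i j l - gnormalize b i j l)))^2)"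
  have sq: "0 \<le> X \<Longrightarrow> (sqrt (g * X))^2 = g * X" for X using g0 by simp
  have nn: "0 \<le> D" "0 \<le> E" "0 \<le> T" unfolding D_def E_def T_def by (auto intro!: sum_nonneg)
  have "(\<Sum>i\<in>I. \<Sum>j\<in>I. \<Sum>l\<in>I. (1 - \<epsilon>) * (norm (a i j l - gnormalize b i j l))^2
        + (1 - \<eta>) * (norm ((a i j l - b i j l) - (a i j l - gnormalize b i j l)))^2) \<le> D"
    unfolding D_def
  proof (intro sum_mono)
    fix i j l assume "i \<in> I" "j \<in> I" "l \<in> I"
    then have p: "norm (a i j l) = 1" "(norm (a i j l - b i j l))^2 \<le> u0" using pt unfolding I_def by auto
    show "(1 - \<epsilon>) * (norm (a i j l - gnormalize b i j l))^2
        + (1 - \<eta>) * (norm ((a i j l - b i j l) - (a i j l - gnormalize b i j l)))^2 \<le> (norm (a i j l - b i j l))^2"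
      unfolding gnormalize_def by (rule part2_point[OF p assms(2-6)])
  qed
  then have "(1 - \<epsilon>) * E + (1 - \<eta>) * T \<le> D"
    unfolding E_def T_def by (simp add: sum.distrib sum_distrib_left)
  then have "g * ((1 - \<epsilon>) * E + (1 - \<eta>) * T) \<le> g * D" using g0 by (rule mult_left_mono)
  then have "(1 - \<epsilon>) * (g * E) + (1 - \<eta>) * (g * T) \<le> g * D" by (simp add: algebra_simps)
  then show ?thesis
    unfolding l2norm_def using nn g0
    by (simp add: D_def E_def T_def I_def g_def)
qed

lemma part3_sum:
  fixes e d :: gridfun
  assumes N: "N \<ge> 1" and Q: "0 \<le> Q"
    and px: "\<And>i j l. i \<in> {1..N} \<Longrightarrow> j \<in> {1..N} \<Longrightarrow> l \<in> {1..N} \<Longrightarrow>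
       (norm (Dx N e i j l))^2 \<le> (1 + \<delta>) * (norm (Dx N d i j l))^2 + Q * ((norm (d i j l))^2 + (norm (d (Suc i) j l))^2)"
    and py: "\<And>i j l. i \<in> {1..N} \<Longrightarrow> j \<in> {1..N} \<Longrightarrow> l \<in> {1..N} \<Longrightarrow>
       (norm (Dy N e i j l))^2 \<le> (1 + \<delta>) * (norm (Dy N d i j l))^2 + Q * ((norm (d i j l))^2 + (norm (d i (Suc j) l))^2)"
    and pz: "\<And>i j l. i \<in> {1..N} \<Longrightarrow> j \<in> {1..N} \<Longrightarrow> l \<in> {1..N} \<Longrightarrow>
       (norm (Dz N e i j l))^2 \<le> (1 + \<delta>) * (norm (Dz N d i j l))^2 + Q * ((norm (d i j l))^2 + (norm (d i j (Suc l)))^2)"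
    and cl: "\<And>i j l. i \<le> N+1 \<Longrightarrow> j \<le> N+1 \<Longrightarrow> l \<le> N+1 \<Longrightarrow> d i j l = d (clampi N i) (clampi N j) (clampi N l)"
  shows "(gradnorm N e)^2 \<le> (1 + \<delta>) * (gradnorm N d)^2 + (9 * Q) * (l2norm N d)^2"
proof -
  define I where "I = {1..N}"
  define g where "g = gh N ^ 3"
  have g0: "0 \<le> g" unfolding g_def gh_def by simp
  define r where "r i j l = (norm (d i j l))^2" for i j l
  have rcl: "\<And>i j l. i \<le> N+1 \<Longrightarrow> j \<le> N+1 \<Longrightarrow> l \<le> N+1 \<Longrightarrow> r i j l = r (clampi N i) (clampi N j) (clampi N l)"
    unfolding r_def using cl by simp
  have rnn: "\<And>i j l. 0 \<le> r i j l" unfolding r_def by simp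
  note sh = shift3[where r=r, OF N rcl rnn]
  define R where "R = (\<Sum>i\<in>I. \<Sum>j\<in>I. \<Sum>l\<in>I. r i j l)"
  define Rx where "Rx = (\<Sum>i\<in>I. \<Sum>j\<in>I. \<Sum>l\<in>I. r (Suc i) j l)"
  define Ry where "Ry = (\<Sum>i\<in>I. \<Sum>j\<in>I. \<Sum>l\<in>I. r i (Suc j) l)"
  define Rz where "Rz = (\<Sum>i\<in>I. \<Sum>j\<in>I. \<Sum>l\<in>I. r i j (Suc l))"
  have shx: "Rx \<le> 2 * R" "Ry \<le> 2 * R" "Rz \<le> 2 * R"
    using sh unfolding Rx_def Ry_def Rz_def R_def I_def by auto
  define GE where "GE = (\<Sum>i\<in>I. \<Sum>j\<in>I. \<Sum>l\<in>I. (norm (Dx N e i j l))^2 + (norm (Dy N e i j l))^2 + (norm (Dz N e i j l))^2)"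
  define GD where "GD = (\<Sum>i\<in>I. \<Sum>j\<in>I. \<Sum>l\<in>I. (norm (Dx N d i j l))^2 + (norm (Dy N d i j l))^2 + (norm (Dz N d i j l))^2)"
  have "GE \<le> (\<Sum>i\<in>I. \<Sum>j\<in>I. \<Sum>l\<in>I. (1 + \<delta>) * ((norm (Dx N d i j l))^2 + (norm (Dy N d i j l))^2 + (norm (Dz N d i j l))^2)
        + Q * (3 * r i j l + r (Suc i) j l + r i (Suc j) l + r i j (Suc l)))"
    unfolding GE_def
  proof (intro sum_mono)
    fix i j l assume "i \<in> I" "j \<in> I" "l \<in> I"
    then have p: "i \<in> {1..N}" "j \<in> {1..N}" "l \<in> {1..N}" unfolding I_def by auto
    show "(norm (Dx N e i j l))^2 + (norm (Dy N e i j l))^2 + (norm (Dz N e i j l))^2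
       \<le> (1 + \<delta>) * ((norm (Dx N d i j l))^2 + (norm (Dy N d i j l))^2 + (norm (Dz N d i j l))^2)
        + Q * (3 * r i j l + r (Suc i) j l + r i (Suc j) l + r i j (Suc l))"
      using px[OF p] py[OF p] pz[OF p] unfolding r_def by (simp add: algebra_simps)
  qed
  also have "\<dots> = (1 + \<delta>) * GD + Q * (3 * R + Rx + Ry + Rz)"
    unfolding GD_def R_def Rx_def Ry_def Rz_def by (simp add: sum.distrib sum_distrib_left distrib_left)
  also have "\<dots> \<le> (1 + \<delta>) * GD + Q * (9 * R)"
    using shx Q by (intro add_left_mono mult_left_mono) auto
  finally have main: "GE \<le> (1 + \<delta>) * GD + 9 * Q * R" by simp
  have nn: "0 \<le> GE" "0 \<le> GD" "0 \<le> R" unfolding GE_def GD_def R_def r_def by (auto intro!: sum_nonneg)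
  have "g * GE \<le> g * ((1 + \<delta>) * GD + 9 * Q * R)" using main g0 by (rule mult_left_mono)
  then have "g * GE \<le> (1 + \<delta>) * (g * GD) + (9 * Q) * (g * R)" by (simp add: algebra_simps)
  then show ?thesis
    unfolding gradnorm_def l2norm_def using nn g0
    by (simp add: GE_def GD_def R_def r_def I_def g_def)
qed




lemma Dsq: "N \<ge> 1 \<Longrightarrow> (norm ((x::real^3) /\<^sub>R gh N))^2 = (norm x)^2 / (gh N)^2"
  by (rule norm_div_sq) (simp add: gh_def)

lemma linf_main:
  fixes me :: "real^3 \<Rightarrow> real^3" and mt :: gridfun
  assumes C: "C1 > 0" "C2 > 0" and N: "N \<ge> 1" and X: "in_X N mt"
    and k: "k > 0" "C1 * gh N \<le> k" "k \<le> C2 * gh N"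
    and L: "l2norm N (\<lambda>i j l. Ph N me i j l - mt i j l) \<le> 2 * k powr (15/8)"
    and G: "gradnorm N (\<lambda>i j l. Ph N me i j l - mt i j l) \<le> 1/2 * k powr (11/8)"
    and s1: "k powr (1/8) \<le> 1"
    and B: "B = 4 * C2^3 + C2 + 1/C1 + 1"
  shows "\<forall>i\<le>N+1. \<forall>j\<le>N+1. \<forall>l\<le>N+1. (norm (Ph N me i j l - mt i j l))^2 \<le> B3f B * (k powr (1/8))^13"
proof -
  define \<sigma> where "\<sigma> = k powr (1/8)"
  have sp: "0 < \<sigma>" unfolding \<sigma>_def using k by simp
  have s8: "\<sigma>^8 = k" unfolding \<sigma>_def using kpow[OF k(1), of 8] k by simp
  have s15: "k powr (15/8) = \<sigma>^15" unfolding \<sigma>_def using kpow[OF k(1), of 15] by simp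
  have s11: "k powr (11/8) = \<sigma>^11" unfolding \<sigma>_def using kpow[OF k(1), of 11] by simp
  define h where "h = gh N"
  have hN: "h * real N = 1" "h > 0" unfolding h_def gh_def using N by auto
  define f where "f i j l = Ph N me i j l - mt i j l" for i j l
  define I where "I = {1..N}"
  define U where "U = (\<Sum>i\<in>I. \<Sum>j\<in>I. \<Sum>l\<in>I. (norm (f i j l))^2)"
  define Wx where "Wx = (\<Sum>i\<in>I. \<Sum>j\<in>I. \<Sum>l\<in>I. (norm (f (Suc i) j l - f i j l))^2)"
  define Wy where "Wy = (\<Sum>i\<in>I. \<Sum>j\<in>I. \<Sum>l\<in>I. (norm (f i (Suc j) l - f i j l))^2)"
  define Wz where "Wz = (\<Sum>i\<in>I. \<Sum>j\<in>I. \<Sum>l\<in>I. (norm (f i j (Suc l) - f i j l))^2)"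
  have nn: "0 \<le> U" "0 \<le> Wx" "0 \<le> Wy" "0 \<le> Wz" unfolding U_def Wx_def Wy_def Wz_def by (auto intro!: sum_nonneg)
  have L2: "h^3 * U \<le> 4 * \<sigma>^30"
  proof -
    have "sqrt (h^3 * U) \<le> 2 * \<sigma>^15" using L unfolding l2norm_def s15 U_def f_def[abs_def] h_def I_def by simp
    then have "h^3 * U \<le> (2 * \<sigma>^15)^2" by (rule sqrt_le_sq[rotated]) (use hN nn in simp)
    then show ?thesis by (simp add: power_mult_distrib power2_eq_square flip: power_add)
  qed
  have G2: "h * (Wx + Wy + Wz) \<le> \<sigma>^22 / 4"
  proof -
    have eq: "(\<Sum>i\<in>I. \<Sum>j\<in>I. \<Sum>l\<in>I. (norm (Dx N f i j l))^2 + (norm (Dy N f i j l))^2 + (norm (Dz N f i j l))^2)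
        = (Wx + Wy + Wz) / h^2"
      unfolding Wx_def Wy_def Wz_def Dx_def Dy_def Dz_def Dsq[OF N] h_def
      by (simp add: sum.distrib add_divide_distrib sum_divide_distrib)
    have G': "sqrt (h^3 * (\<Sum>i\<in>I. \<Sum>j\<in>I. \<Sum>l\<in>I. (norm (Dx N f i j l))^2 + (norm (Dy N f i j l))^2 + (norm (Dz N f i j l))^2)) \<le> \<sigma>^11 / 2"
      using G unfolding gradnorm_def s11 f_def[abs_def] I_def h_def by simp
    have "sqrt (h^3 * ((Wx + Wy + Wz) / h^2)) \<le> \<sigma>^11 / 2"
      using G' unfolding eq .
    moreover have "h^3 * ((Wx + Wy + Wz) / h^2) = h * (Wx + Wy + Wz)" using hN
      by (simp add: power2_eq_square power3_eq_cube)
    ultimately have "sqrt (h * (Wx + Wy + Wz)) \<le> \<sigma>^11 / 2" by simp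
    then have "h * (Wx + Wy + Wz) \<le> (\<sigma>^11 / 2)^2" by (rule sqrt_le_sq[rotated]) (use hN nn in simp)
    then show ?thesis by (simp add: power_divide power2_eq_square flip: power_add)
  qed
  have NC: "real N * \<sigma>^8 \<le> C2"
  proof -
    have "k \<le> C2 * h" using k unfolding h_def by simp
    then have "real N * k \<le> real N * (C2 * h)" by (intro mult_left_mono) auto
    also have "\<dots> = C2" using hN by (simp add: algebra_simps)
    finally show ?thesis using s8 by simp
  qed
  have Bge: "4 * C2^3 \<le> B" "C2 \<le> B" "1 / C1 \<le> B" "0 \<le> B" using C B by auto
  have Ub: "U \<le> B * \<sigma>^6"
  proof -
    have "U = (h^3 * U) * (real N)^3" using hN by (simp add: power_mult_distrib[symmetric] algebra_simps
          power3_eq_cube)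
    also have "\<dots> \<le> (4 * \<sigma>^30) * (real N)^3" using L2 by (intro mult_right_mono) auto
    also have "\<dots> = 4 * \<sigma>^6 * (real N * \<sigma>^8)^3" by (simp add: power_mult_distrib flip: power_mult power_add)
    also have "\<dots> \<le> 4 * \<sigma>^6 * C2^3" using NC sp by (intro mult_left_mono power_mono) auto
    also have "\<dots> = (4 * C2^3) * \<sigma>^6" by simp
    also have "\<dots> \<le> B * \<sigma>^6" using Bge sp by (intro mult_right_mono) auto
    finally show ?thesis .
  qed
  have Wb: "Wx + Wy + Wz \<le> B * \<sigma>^14"
  proof -
    have "Wx + Wy + Wz = (h * (Wx + Wy + Wz)) * real N" using hN by (simp add: algebra_simps)
    also have "\<dots> \<le> (\<sigma>^22 / 4) * real N" using G2 by (intro mult_right_mono) auto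
    also have "\<dots> = \<sigma>^14 * (real N * \<sigma>^8) / 4" by (simp add: flip: power_add)
    also have "\<dots> \<le> \<sigma>^14 * C2 / 4" using NC sp by (intro divide_right_mono mult_left_mono) auto
    also have "\<dots> \<le> B * \<sigma>^14" using Bge sp C by simp
    finally show ?thesis .
  qed
  have iN: "1 / real N \<le> B * \<sigma>^8"
  proof -
    have "1 / real N = h" unfolding h_def gh_def by simp
    also have "h \<le> k / C1" using k C unfolding h_def by (simp add: field_simps)
    also have "k / C1 = (1 / C1) * \<sigma>^8" using s8 by simp
    also have "\<dots> \<le> B * \<sigma>^8" using Bge sp by (intro mult_right_mono) auto
    finally show ?thesis .
  qed
  have inner: "(norm (f i j l))^2 \<le> B3f B * \<sigma>^13" if "i \<in> {1..N}" "j \<in> {1..N}" "l \<in> {1..N}" for i j l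
    unfolding B3f_def
    by (rule linf[OF sp s1[folded \<sigma>_def] Bge(4)])
      (use Ub Wb nn iN that in \<open>auto simp: U_def Wx_def Wy_def Wz_def I_def\<close>)
  show ?thesis
  proof (intro allI impI)
    fix i j l assume b: "i \<le> N+1" "j \<le> N+1" "l \<le> N+1"
    have "f i j l = f (clampi N i) (clampi N j) (clampi N l)"
      unfolding f_def using mt_clamp[OF X N b] Ph_clamp[OF N] by simp
    then have "(norm (f i j l))^2 \<le> B3f B * \<sigma>^13"
      using inner[OF clampi_in[OF N] clampi_in[OF N] clampi_in[OF N]] by simp
    then show "(norm (Ph N me i j l - mt i j l))^2 \<le> B3f B * (k powr (1/8))^13"
      unfolding f_def \<sigma>_def .
  qed
qed




lemma root8: "0 < (x::real) \<Longrightarrow> (x^8) powr (1/8) = x"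
proof -
  assume x: "0 < x"
  have "(x^8) powr (1/8) = (x powr (real 8)) powr (1/8)" using x by (simp add: powr_realpow)
  also have "\<dots> = x powr (real 8 * (1/8))" by (rule powr_powr)
  finally show ?thesis using x by simp
qed

theorem mainTheorem3:
  fixes Cs C1 C2 :: real
  assumes "Cs > 0" and "C1 > 0" and "C2 > 0"
  shows "\<exists>k0>0. \<forall>\<delta>>0. \<exists>C\<delta>. \<forall>(me :: real^3 \<Rightarrow> real^3) (N :: nat) (k :: real) (mt :: gridfun).
     (continuous_on unit_cube me \<and> Cs-lipschitz_on unit_cube me \<and>
      (\<forall>x\<in>unit_cube. norm (me x) = 1) \<and>
      N \<ge> 1 \<and> in_X N mt \<and>
      k > 0 \<and> C1 * gh N \<le> k \<and> k \<le> C2 * gh N \<and> k \<le> k0 \<and> gh N \<le> k0 \<and>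
      l2norm N (\<lambda>i j l. Ph N me i j l - mt i j l) \<le> 2 * k powr (15/8) \<and>
      gradnorm N (\<lambda>i j l. Ph N me i j l - mt i j l) \<le> 1/2 * k powr (11/8))
     \<longrightarrow>
     (let et = (\<lambda>i j l. Ph N me i j l - mt i j l);
          e  = (\<lambda>i j l. Ph N me i j l - gnormalize mt i j l)
      in (\<forall>i\<le>N+1. \<forall>j\<le>N+1. \<forall>l\<le>N+1. mt i j l \<noteq> 0) \<and>
         (l2norm N et)\<^sup>2 \<ge> (1 - k powr (5/4)) * (l2norm N e)\<^sup>2
                           + (1 - k powr (1/4)) * (l2norm N (\<lambda>i j l. et i j l - e i j l))\<^sup>2 \<and>
         (gradnorm N e)\<^sup>2 \<le> (1 + \<delta>) * (gradnorm N et)\<^sup>2 + C\<delta> * (l2norm N et)\<^sup>2)"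
proof -
  note Cs = assms(1) and C1 = assms(2) and C2 = assms(3)
  define B where "B = 4 * C2^3 + C2 + 1/C1 + 1"
  have Bp: "B > 0" unfolding B_def using C1 C2 by (simp add: add_pos_pos)
  define B3 where "B3 = B3f B"
  have B3p: "B3 > 0" unfolding B3_def B3f_def using Bp by (simp add: add_pos_pos)
  define s0 where "s0 = min (1/2) (1/(2*B3))"
  have s0p: "0 < s0" unfolding s0_def using B3p by simp
  define k0 where "k0 = s0^8"
  have k0p: "0 < k0" unfolding k0_def using s0p by simp
  show ?thesis
  proof (rule exI[of _ k0], intro conjI k0p allI impI)
    fix \<delta> :: real assume \<delta>: "\<delta> > 0"
    define \<delta>1 where "\<delta>1 = min \<delta> 1"
    define \<epsilon>1 where "\<epsilon>1 = \<delta>1 / 120"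
    define hq where "hq = min (\<epsilon>1 / (Cs + 1)) (\<epsilon>1^2 / (B3 * C2 + 1))"
    define Q where "Q = 16 * (1 + 3/\<delta>1) * Cs^2 + 8 / hq^2"
    have Q0: "0 \<le> Q" unfolding Q_def \<delta>1_def using \<delta> by simp
    show "\<exists>C\<delta>. \<forall>(me :: real^3 \<Rightarrow> real^3) (N :: nat) (k :: real) (mt :: gridfun).
     (continuous_on unit_cube me \<and> Cs-lipschitz_on unit_cube me \<and>
      (\<forall>x\<in>unit_cube. norm (me x) = 1) \<and>
      N \<ge> 1 \<and> in_X N mt \<and>
      k > 0 \<and> C1 * gh N \<le> k \<and> k \<le> C2 * gh N \<and> k \<le> k0 \<and> gh N \<le> k0 \<and>
      l2norm N (\<lambda>i j l. Ph N me i j l - mt i j l) \<le> 2 * k powr (15/8) \<and>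
      gradnorm N (\<lambda>i j l. Ph N me i j l - mt i j l) \<le> 1/2 * k powr (11/8))
     \<longrightarrow>
     (let et = (\<lambda>i j l. Ph N me i j l - mt i j l);
          e  = (\<lambda>i j l. Ph N me i j l - gnormalize mt i j l)
      in (\<forall>i\<le>N+1. \<forall>j\<le>N+1. \<forall>l\<le>N+1. mt i j l \<noteq> 0) \<and>
         (l2norm N et)\<^sup>2 \<ge> (1 - k powr (5/4)) * (l2norm N e)\<^sup>2
                           + (1 - k powr (1/4)) * (l2norm N (\<lambda>i j l. et i j l - e i j l))\<^sup>2 \<and>
         (gradnorm N e)\<^sup>2 \<le> (1 + \<delta>) * (gradnorm N et)\<^sup>2 + C\<delta> * (l2norm N et)\<^sup>2)"
    proof (rule exI[of _ "9 * Q"], intro allI impI)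
      fix me :: "real^3 \<Rightarrow> real^3" and N :: nat and k :: real and mt :: gridfun
      assume H: "continuous_on unit_cube me \<and> Cs-lipschitz_on unit_cube me \<and>
        (\<forall>x\<in>unit_cube. norm (me x) = 1) \<and>
        N \<ge> 1 \<and> in_X N mt \<and>
        k > 0 \<and> C1 * gh N \<le> k \<and> k \<le> C2 * gh N \<and> k \<le> k0 \<and> gh N \<le> k0 \<and>
        l2norm N (\<lambda>i j l. Ph N me i j l - mt i j l) \<le> 2 * k powr (15/8) \<and>
        gradnorm N (\<lambda>i j l. Ph N me i j l - mt i j l) \<le> 1/2 * k powr (11/8)"
      have lip: "Cs-lipschitz_on unit_cube me" and unit: "\<forall>x\<in>unit_cube. norm (me x) = 1"
        and N: "N \<ge> 1" and X: "in_X N mt" and kp: "k > 0" and k1: "C1 * gh N \<le> k"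
        and k2: "k \<le> C2 * gh N" and kk0: "k \<le> k0"
        and L: "l2norm N (\<lambda>i j l. Ph N me i j l - mt i j l) \<le> 2 * k powr (15/8)"
        and G: "gradnorm N (\<lambda>i j l. Ph N me i j l - mt i j l) \<le> 1/2 * k powr (11/8)"
        using H by auto
      define \<sigma> where "\<sigma> = k powr (1/8)"
      have sp: "0 < \<sigma>" unfolding \<sigma>_def using kp by simp
      have s8: "\<sigma>^8 = k" unfolding \<sigma>_def using kpow[OF kp, of 8] kp by simp
      have s10: "k powr (5/4) = \<sigma>^10" unfolding \<sigma>_def using kpow[OF kp, of 10] by simp
      have s2: "k powr (1/4) = \<sigma>^2" unfolding \<sigma>_def using kpow[OF kp, of 2] by simp
      have ss0: "\<sigma> \<le> s0"
      proof -
        have "k powr (1/8) \<le> k0 powr (1/8)" using kk0 kp by (intro powr_mono2) auto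
        then show ?thesis unfolding \<sigma>_def k0_def using root8[OF s0p] by simp
      qed
      have s1: "\<sigma> \<le> 1" using ss0 unfolding s0_def by simp
      have hp: "gh N > 0" using N unfolding gh_def by simp
      have LI: "\<forall>i\<le>N+1. \<forall>j\<le>N+1. \<forall>l\<le>N+1. (norm (Ph N me i j l - mt i j l))^2 \<le> B3 * \<sigma>^13"
        using linf_main[OF C1 C2 N X kp k1 k2 L G s1[unfolded \<sigma>_def] B_def]
        unfolding B3_def \<sigma>_def .
      have sm1: "B3 * \<sigma>^13 \<le> \<sigma>^12 / 2"
      proof -
        have "B3 * \<sigma> \<le> B3 * (1/(2*B3))" using ss0 B3p unfolding s0_def by (intro mult_left_mono) auto
        also have "\<dots> = 1/2" using B3p by simp
        finally have "(B3 * \<sigma>) * \<sigma>^12 \<le> (1/2) * \<sigma>^12" using sp by (intro mult_right_mono) auto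
        moreover have "\<sigma>^13 = \<sigma> * \<sigma>^12" using power_add[of \<sigma> 1 12] by simp
        ultimately show ?thesis by (simp add: mult.assoc)
      qed
      have s12: "\<sigma>^12 \<le> 1" using sp s1 by (simp add: power_le_one)
      have sm2: "B3 * \<sigma>^13 \<le> B3 * C2 * gh N"
      proof -
        have "\<sigma>^13 \<le> \<sigma>^8" using sp s1 by (intro pow_mono_le) auto
        also have "\<dots> \<le> C2 * gh N" using s8 k2 by simp
        finally show ?thesis using B3p by (simp add: mult_left_mono mult.assoc)
      qed
      have "\<sigma>^12 \<le> \<sigma>^1" using sp s1 by (intro pow_mono_le) auto
      moreover have "\<sigma> \<le> 1/2" using ss0 unfolding s0_def by simp
      ultimately have s12h: "\<sigma>^12 \<le> 1/2" by simp
      have R4: "B3 * \<sigma>^13 \<le> 1/4" using sm1 s12h by simp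
      have unitP: "\<And>i j l. norm (Ph N me i j l) = 1" by (rule Ph_unit[OF N unit])
      have P1: "\<forall>i\<le>N+1. \<forall>j\<le>N+1. \<forall>l\<le>N+1. mt i j l \<noteq> 0"
      proof (intro allI impI)
        fix i j l assume "i \<le> N+1" "j \<le> N+1" "l \<le> N+1"
        then have "(norm (Ph N me i j l - mt i j l))^2 \<le> B3 * \<sigma>^13" using LI by blast
        then have "(norm (Ph N me i j l - mt i j l))^2 \<le> 1/4" using R4 by linarith
        then show "mt i j l \<noteq> 0" using unitP[of i j l] by auto
      qed
      have P2: "(l2norm N (\<lambda>i j l. Ph N me i j l - mt i j l))^2 \<ge>
         (1 - \<sigma>^10) * (l2norm N (\<lambda>i j l. Ph N me i j l - gnormalize mt i j l))^2
         + (1 - \<sigma>^2) * (l2norm N (\<lambda>i j l. (Ph N me i j l - mt i j l) - (Ph N me i j l - gnormalize mt i j l)))^2"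
      proof (rule part2_sum)
        fix i j l assume "i \<in> {1..N}" "j \<in> {1..N}" "l \<in> {1..N}"
        then have "i \<le> N+1" "j \<le> N+1" "l \<le> N+1" by auto
        then have "(norm (Ph N me i j l - mt i j l))^2 \<le> B3 * \<sigma>^13" using LI by blast
        then show "norm (Ph N me i j l) = 1 \<and> (norm (Ph N me i j l - mt i j l))^2 \<le> \<sigma>^12 / 2"
          using unitP[of i j l] sm1 by linarith
      next
        show "\<sigma>^12 / 2 \<le> 1/4" using s12h by simp
        show "2 * (\<sigma>^12 / 2) \<le> \<sigma>^2 * \<sigma>^10" by (simp flip: power_add)
        show "0 \<le> \<sigma>^10" "0 \<le> \<sigma>^2" using sp by auto
        show "\<sigma>^2 \<le> 1" using sp s1 by (simp add: power_le_one)
      qed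
      have P3: "(gradnorm N (\<lambda>i j l. Ph N me i j l - gnormalize mt i j l))^2
          \<le> (1 + \<delta>) * (gradnorm N (\<lambda>i j l. Ph N me i j l - mt i j l))^2
            + (9 * Q) * (l2norm N (\<lambda>i j l. Ph N me i j l - mt i j l))^2"
      proof (rule part3_sum[OF N Q0])
        have pd: "(norm (((Ph N me i' j' l' - mt i' j' l' /\<^sub>R norm (mt i' j' l')) - (Ph N me i j l - mt i j l /\<^sub>R norm (mt i j l))) /\<^sub>R gh N))^2
           \<le> (1 + \<delta>) * (norm (((Ph N me i' j' l' - mt i' j' l') - (Ph N me i j l - mt i j l)) /\<^sub>R gh N))^2
             + Q * ((norm (Ph N me i j l - mt i j l))^2 + (norm (Ph N me i' j' l' - mt i' j' l'))^2)"
          if b: "i \<le> N+1" "j \<le> N+1" "l \<le> N+1" "i' \<le> N+1" "j' \<le> N+1" "l' \<le> N+1"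
            and na: "norm (Ph N me i' j' l' - Ph N me i j l) \<le> Cs * gh N" for i j l i' j' l'
        proof (rule pd_all[OF unitP unitP na _ _ R4 sm2 hp Cs B3p C2 \<delta> \<delta>1_def \<epsilon>1_def hq_def Q_def])
          show "(norm (Ph N me i j l - mt i j l))^2 \<le> B3 * \<sigma>^13" using LI b by blast
          show "(norm (Ph N me i' j' l' - mt i' j' l'))^2 \<le> B3 * \<sigma>^13" using LI b by blast
        qed
        have lipP: "norm (Ph N me (Suc i) j l - Ph N me i j l) \<le> Cs * gh N"
            "norm (Ph N me i (Suc j) l - Ph N me i j l) \<le> Cs * gh N"
            "norm (Ph N me i j (Suc l) - Ph N me i j l) \<le> Cs * gh N" for i j l
          using Ph_lip[OF N lip Cs] by auto
        fix i j l assume i: "i \<in> {1..N}" and j: "j \<in> {1..N}" and l: "l \<in> {1..N}"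
        have b: "i \<le> N+1" "j \<le> N+1" "l \<le> N+1" "Suc i \<le> N+1" "Suc j \<le> N+1" "Suc l \<le> N+1"
          using i j l by auto
        show "(norm (Dx N (\<lambda>i j l. Ph N me i j l - gnormalize mt i j l) i j l))^2
          \<le> (1 + \<delta>) * (norm (Dx N (\<lambda>i j l. Ph N me i j l - mt i j l) i j l))^2
            + Q * ((norm (Ph N me i j l - mt i j l))^2 + (norm (Ph N me (Suc i) j l - mt (Suc i) j l))^2)"
          using pd[OF b(1-3) b(4) b(2) b(3) lipP(1)] unfolding Dx_def gnormalize_def by simp
        show "(norm (Dy N (\<lambda>i j l. Ph N me i j l - gnormalize mt i j l) i j l))^2
          \<le> (1 + \<delta>) * (norm (Dy N (\<lambda>i j l. Ph N me i j l - mt i j l) i j l))^2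
            + Q * ((norm (Ph N me i j l - mt i j l))^2 + (norm (Ph N me i (Suc j) l - mt i (Suc j) l))^2)"
          using pd[OF b(1-3) b(1) b(5) b(3) lipP(2)] unfolding Dy_def gnormalize_def by simp
        show "(norm (Dz N (\<lambda>i j l. Ph N me i j l - gnormalize mt i j l) i j l))^2
          \<le> (1 + \<delta>) * (norm (Dz N (\<lambda>i j l. Ph N me i j l - mt i j l) i j l))^2
            + Q * ((norm (Ph N me i j l - mt i j l))^2 + (norm (Ph N me i j (Suc l) - mt i j (Suc l)))^2)"
          using pd[OF b(1-3) b(1) b(2) b(6) lipP(3)] unfolding Dz_def gnormalize_def by simp
      next
        fix i j l assume b: "i \<le> N+1" "j \<le> N+1" "l \<le> N+1"
        show "Ph N me i j l - mt i j l = Ph N me (clampi N i) (clampi N j) (clampi N l) - mt (clampi N i) (clampi N j) (clampi N l)"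
          using mt_clamp[OF X N b] Ph_clamp[OF N] by simp
      qed
      show "let et = (\<lambda>i j l. Ph N me i j l - mt i j l);
          e  = (\<lambda>i j l. Ph N me i j l - gnormalize mt i j l)
      in (\<forall>i\<le>N+1. \<forall>j\<le>N+1. \<forall>l\<le>N+1. mt i j l \<noteq> 0) \<and>
         (l2norm N et)\<^sup>2 \<ge> (1 - k powr (5/4)) * (l2norm N e)\<^sup>2
                           + (1 - k powr (1/4)) * (l2norm N (\<lambda>i j l. et i j l - e i j l))\<^sup>2 \<and>
         (gradnorm N e)\<^sup>2 \<le> (1 + \<delta>) * (gradnorm N et)\<^sup>2 + (9 * Q) * (l2norm N et)\<^sup>2"
        unfolding Let_def s10 s2 using P1 P2 P3 by simp
    qed
  qed
qed


end
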